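(* Let $n\ge3$. Define the rescaled times, for $p\ge0$, $$T^{\alpha,p}=\frac{(2n-2)\Gamma\big(p+1+\frac{2\alpha-1}{2n-2}\big)}{\Gamma\big(\frac{2\alpha-1}{2n-2}\big)}t_{(2n-2)p+2\alpha-1}\ (\alpha=1,\dots,n-1),\qquad T^{n,p}=\frac{2\Gamma(p+\frac32)}{\Gamma(\frac12)}\hat t_{2p+1},$$ and the operators (summation over repeated $\alpha,\beta\in\{1,\dots,n\}$) $$L_{-1}=\sum_{p\ge1}T^{\alpha,p}\frac{\partial}{\partial T^{\alpha,p-1}}+\frac12\eta_{\alpha\beta}T^{\alpha,0}T^{\beta,0},\qquad L_0=\sum_{p\ge0}\big(p+\tfrac12+\mu_\alpha\big)T^{\alpha,p}\frac{\partial}{\partial T^{\alpha,p}}+\frac14\operatorname{tr}\big(\tfrac14-\mu^2\big),$$ $$L_1=\sum_{p\ge0}\big(p+\tfrac12+\mu_\alpha\big)\big(p+\tfrac32+\mu_\alpha\big)T^{\alpha,p}\frac{\partial}{\partial T^{\alpha,p+1}}+\frac12\eta^{\alpha\beta}\big(\tfrac12+\mu_\alpha\big)\big(\tfrac12+\mu_\beta\big)\frac{\partial^2}{\partial T^{\alpha,0}\partial T^{\beta,0}},$$ $$L_2=\sum_{p\ge0}\big(p+\tfrac12+\mu_\alpha\big)\big(p+\tfrac32+\mu_\alpha\big)\big(p+\tfrac52+\mu_\alpha\big)T^{\alpha,p}\frac{\partial}{\partial T^{\alpha,p+2}}+\eta^{\alpha\beta}\big(\tfrac12-\mu_\alpha\big)\big(\tfrac12-\mu_\beta\big)\big(\tfrac32-\mu_\beta\big)\frac{\partial^2}{\partial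 T^{\alpha,1}\partial T^{\beta,0}},$$ and for $j\ge2$ define $L_{j+1}=\frac1{1-j}[L_1,L_j]$. Then $L_j=V_j$ for all $j\ge-1$ (in particular for $j=-1,0,1,2$ by direct comparison, including the constant term of $L_0$).
   Context: $\mu=\operatorname{diag}(\mu_1,\dots,\mu_n)$ with $\mu_\alpha=\frac{2\alpha-n}{2n-2}$ for $\alpha=1,\dots,n-1$ and $\mu_n=0$; $\operatorname{tr}(\frac14-\mu^2)=\sum_\alpha(\frac14-\mu_\alpha^2)$. $\eta_{\alpha\beta}=\frac1{4n-4}\delta_{\alpha+\beta,n}+\frac14\delta_{\alpha n}\delta_{\beta n}$ ($\alpha,\beta=1,\dots,n$), and $(\eta^{\alpha\beta})$ is its inverse matrix. Here $t_k,\hat t_k$ ($k=1,3,5,\dots$) are the times of the Drinfeld–Sokolov hierarchy of type $D_n$, and $V_j=\frac1{8n-8}\sum_{i\in\mathbb Z}:p_ip_{(2n-2)j-i}:+\frac18\sum_{i\in\mathbb Z}:\hat p_i\hat p_{2j-i}:+\delta_{j0}\frac n{24}(1+\frac1{2n-2})$, where for odd $k>0$, $p_k=2\partial/\partial t_k$, $p_{-k}=kt_k$, $\hat p_k=2\partial/\partial\hat t_k$, $\hat p_{-k}=k\hat t_k$, $p_i=\hat p_i=0$ for even $i$, and the normal ordering $:\ :$ places $p_{k>0}$ to the right of $p_{k<0}$. The $V_j$ satisfy $[V_i,V_j]=(i-j)V_{i+j}+\delta_{i+j,0}\frac n{12}(i^3-i)$. *)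

theory Defs
  imports "HOL-Analysis.Analysis" "HOL-Library.Poly_Mapping" "HOL-Library.Groups_Big_Fun"
begin

text \<open>Variables: Tv k is t_k, Th k is hat t_k (only odd k are used).\<close>
datatype dvar = Tv nat | Th nat

text \<open>Formal power series in countably many variables, as coefficient functions on
  monomials (finitely supported exponent maps). Differential operators act on them.\<close>
type_synonym fps = "(dvar \<Rightarrow>\<^sub>0 nat) \<Rightarrow> real"
type_synonym op = "fps \<Rightarrow> fps"

definition mulv :: "dvar \<Rightarrow> op" where
  "mulv x f m = (if Poly_Mapping.lookup m x > 0 then f (Poly_Mapping.update x (Poly_Mapping.lookup m x - 1) m) else 0)"

definition dv :: "dvar \<Rightarrow> op" where
  "dv x f m = real (Poly_Mapping.lookup m x + 1) * f (m + Poly_Mapping.single x 1)"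

definition comm :: "op \<Rightarrow> op \<Rightarrow> op" where
  "comm A B f m = A (B f) m - B (A f) m"

definition mu :: "nat \<Rightarrow> nat \<Rightarrow> real" where
  "mu n a = (if a = n then 0 else (2 * real a - real n) / (2 * real n - 2))"

definition eta :: "nat \<Rightarrow> nat \<Rightarrow> nat \<Rightarrow> real" where
  "eta n a b = (if a + b = n then 1 / (4 * real n - 4) else 0)
             + (if a = n \<and> b = n then 1/4 else 0)"

definition eta_inv :: "nat \<Rightarrow> nat \<Rightarrow> nat \<Rightarrow> real" where
  "eta_inv n a b = (if a + b = n then 4 * real n - 4 else 0)
             + (if a = n \<and> b = n then 4 else 0)"

definition Tvar :: "nat \<Rightarrow> nat \<Rightarrow> nat \<Rightarrow> dvar" where
  "Tvar n a p = (if a = n then Th (2 * p + 1) else Tv ((2 * n - 2) * p + 2 * a - 1))"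

definition Tc :: "nat \<Rightarrow> nat \<Rightarrow> nat \<Rightarrow> real" where
  "Tc n a p = (if a = n then 2 * Gamma (real p + 3/2) / Gamma (1/2)
     else (2 * real n - 2) * Gamma (real p + 1 + (2 * real a - 1) / (2 * real n - 2))
            / Gamma ((2 * real a - 1) / (2 * real n - 2)))"

definition mT :: "nat \<Rightarrow> nat \<Rightarrow> nat \<Rightarrow> op" where
  "mT n a p f m = Tc n a p * mulv (Tvar n a p) f m"

definition dT :: "nat \<Rightarrow> nat \<Rightarrow> nat \<Rightarrow> op" where
  "dT n a p f m = dv (Tvar n a p) f m / Tc n a p"

definition Lm1 :: "nat \<Rightarrow> op" where
  "Lm1 n f m =
     (\<Sum>(a,p). if a \<in> {1..n} \<and> p \<ge> 1 then mT n a p (dT n a (p - 1) f) m else 0)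
   + (\<Sum>a\<in>{1..n}. \<Sum>b\<in>{1..n}. 1/2 * eta n a b * mT n a 0 (mT n b 0 f) m)"

definition L0 :: "nat \<Rightarrow> op" where
  "L0 n f m =
     (\<Sum>(a,p). if a \<in> {1..n} then (real p + 1/2 + mu n a) * mT n a p (dT n a p f) m else 0)
   + 1/4 * (\<Sum>a\<in>{1..n}. 1/4 - (mu n a)\<^sup>2) * f m"

definition L1 :: "nat \<Rightarrow> op" where
  "L1 n f m =
     (\<Sum>(a,p). if a \<in> {1..n} then (real p + 1/2 + mu n a) * (real p + 3/2 + mu n a)
                   * mT n a p (dT n a (p + 1) f) m else 0)
   + (\<Sum>a\<in>{1..n}. \<Sum>b\<in>{1..n}. 1/2 * eta_inv n a b * (1/2 + mu n a) * (1/2 + mu n b)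
                   * dT n a 0 (dT n b 0 f) m)"

definition L2 :: "nat \<Rightarrow> op" where
  "L2 n f m =
     (\<Sum>(a,p). if a \<in> {1..n} then (real p + 1/2 + mu n a) * (real p + 3/2 + mu n a)
                   * (real p + 5/2 + mu n a) * mT n a p (dT n a (p + 2) f) m else 0)
   + (\<Sum>a\<in>{1..n}. \<Sum>b\<in>{1..n}. eta_inv n a b * (1/2 - mu n a) * (1/2 - mu n b) * (3/2 - mu n b)
                   * dT n a 1 (dT n b 0 f) m)"

text \<open>Lhi n k = L_{k+2}; recursion L_{j+1} = 1/(1-j) [L_1, L_j] for j >= 2.\<close>
fun Lhi :: "nat \<Rightarrow> nat \<Rightarrow> op" where
  "Lhi n 0 = L2 n"
| "Lhi n (Suc k) = (\<lambda>f m. (1 / (1 - (real k + 2))) * comm (L1 n) (Lhi n k) f m)"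

definition Lop :: "nat \<Rightarrow> int \<Rightarrow> op" where
  "Lop n j = (if j = -1 then Lm1 n else if j = 0 then L0 n else if j = 1 then L1 n
              else Lhi n (nat (j - 2)))"

definition pop :: "(nat \<Rightarrow> dvar) \<Rightarrow> int \<Rightarrow> op" where
  "pop v i f m = (if even i then 0
      else if i > 0 then 2 * dv (v (nat i)) f m
      else real (nat (- i)) * mulv (v (nat (- i))) f m)"

text \<open>Normal ordered product :p_a p_b: (annihilators p_{k>0} to the right).\<close>
definition nop :: "(nat \<Rightarrow> dvar) \<Rightarrow> int \<Rightarrow> int \<Rightarrow> op" where
  "nop v a b = (if a > 0 \<and> b < 0 then pop v b \<circ> pop v a else pop v a \<circ> pop v b)"

definition Vop :: "nat \<Rightarrow> int \<Rightarrow> op" where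
  "Vop n j f m =
     Sum_any (\<lambda>i::int. 1 / (8 * real n - 8) * nop Tv i ((2 * int n - 2) * j - i) f m)
   + Sum_any (\<lambda>i::int. 1 / 8 * nop Th i (2 * j - i) f m)
   + (if j = 0 then real n / 24 * (1 + 1 / (2 * real n - 2)) * f m else 0)"

end

theory Submission
  imports Defs
begin

lemma lookup_upd_dec:
  fixes m :: "dvar \<Rightarrow>\<^sub>0 nat"
  assumes "Poly_Mapping.lookup m x > 0"
  shows "Poly_Mapping.update x (Poly_Mapping.lookup m x - 1) m + Poly_Mapping.single x 1 = m"
proof (intro poly_mapping_eqI)
  fix k show "Poly_Mapping.lookup (Poly_Mapping.update x (Poly_Mapping.lookup m x - 1) m + Poly_Mapping.single x 1) k = Poly_Mapping.lookup m k"
    using assms by (cases "k = x") (auto simp: lookup_add lookup_update lookup_single)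
qed

lemma upd_add_same:
  fixes m :: "dvar \<Rightarrow>\<^sub>0 nat" shows
  "Poly_Mapping.update x (Poly_Mapping.lookup (m + Poly_Mapping.single x 1) x - 1) (m + Poly_Mapping.single x 1) = m"
  by (intro poly_mapping_eqI) (auto simp: lookup_add lookup_update lookup_single when_def)

lemma upd_add_same2:
  fixes m :: "dvar \<Rightarrow>\<^sub>0 nat" shows
  "Poly_Mapping.update x (Poly_Mapping.lookup m x) (m + Poly_Mapping.single x (Suc 0)) = m"
  by (intro poly_mapping_eqI) (auto simp: lookup_add lookup_update lookup_single when_def)

lemma upd_add_comm:
  fixes m :: "dvar \<Rightarrow>\<^sub>0 nat"
  assumes "x \<noteq> y"
  shows "Poly_Mapping.update x (Poly_Mapping.lookup m x - 1) (m + Poly_Mapping.single y 1)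
       = Poly_Mapping.update x (Poly_Mapping.lookup m x - 1) m + Poly_Mapping.single y 1"
  using assms by (intro poly_mapping_eqI) (auto simp: lookup_add lookup_update lookup_single when_def)

lemma upd_upd_comm:
  fixes m :: "dvar \<Rightarrow>\<^sub>0 nat"
  assumes "x \<noteq> y"
  shows "Poly_Mapping.update x a (Poly_Mapping.update y b m)
       = Poly_Mapping.update y b (Poly_Mapping.update x a m)"
  using assms by (intro poly_mapping_eqI) (auto simp: lookup_update)

lemma dd_comm: "dv x (dv y f) m = dv y (dv x f) m"
  by (auto simp: dv_def lookup_add lookup_single when_def ac_simps)

lemma xx_comm: "mulv x (mulv y f) m = mulv y (mulv x f) m"
  by (cases "x = y") (auto simp: mulv_def lookup_update upd_upd_comm)

lemma dx_comm: "dv x (mulv y f) m = mulv y (dv x f) m + (if x = y then f m else 0)"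
proof (cases "x = y")
  case True
  have L: "dv y (mulv y f) m = (real (Poly_Mapping.lookup m y) + 1) * f m"
    by (simp add: dv_def mulv_def lookup_add upd_add_same2)
  have R: "mulv y (dv y f) m = real (Poly_Mapping.lookup m y) * f m"
  proof (cases "Poly_Mapping.lookup m y > 0")
    case True
    then show ?thesis
      by (simp add: dv_def mulv_def lookup_update of_nat_diff lookup_upd_dec[OF True, simplified] add.commute[of "Poly_Mapping.single y (Suc 0)"])
  qed (simp add: mulv_def)
  show ?thesis using L R True by (simp add: algebra_simps)
next
  case False
  then show ?thesis
    by (auto simp: dv_def mulv_def lookup_add lookup_update lookup_single when_def upd_add_comm[OF not_sym[OF False], simplified])
qed

lemma dd_commf: "dv x (dv y f) = dv y (dv x f)"
  by (rule ext) (rule dd_comm)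

lemma xx_commf: "mulv x (mulv y f) = mulv y (mulv x f)"
  by (rule ext) (rule xx_comm)

lemma dx_commf: "dv x (mulv y f) = (\<lambda>m. mulv y (dv x f) m + (if x = y then f m else 0))"
  by (rule ext) (rule dx_comm)

lemma dv_add: "dv x (\<lambda>m. g m + h m) = (\<lambda>m. dv x g m + dv x h m)"
  by (rule ext) (simp add: dv_def algebra_simps)
lemma dv_diff: "dv x (\<lambda>m. g m - h m) = (\<lambda>m. dv x g m - dv x h m)"
  by (rule ext) (simp add: dv_def algebra_simps)
lemma dv_cm: "dv x (\<lambda>m. c * g m) = (\<lambda>m. c * dv x g m)"
  by (rule ext) (simp add: dv_def algebra_simps)
lemma dv_sum: "dv x (\<lambda>m. \<Sum>k\<in>S. g k m) = (\<lambda>m. \<Sum>k\<in>S. dv x (g k) m)"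
  by (rule ext) (simp add: dv_def sum_distrib_left)
lemma dv_zero: "dv x (\<lambda>m. 0) = (\<lambda>m. 0)"
  by (rule ext) (simp add: dv_def)
lemma dv_if: "dv x (\<lambda>m. if P then g m else 0) = (\<lambda>m. if P then dv x g m else 0)"
  by (rule ext) (simp add: dv_def)

lemma mulv_add: "mulv x (\<lambda>m. g m + h m) = (\<lambda>m. mulv x g m + mulv x h m)"
  by (rule ext) (simp add: mulv_def algebra_simps)
lemma mulv_diff: "mulv x (\<lambda>m. g m - h m) = (\<lambda>m. mulv x g m - mulv x h m)"
  by (rule ext) (simp add: mulv_def algebra_simps)
lemma mulv_cm: "mulv x (\<lambda>m. c * g m) = (\<lambda>m. c * mulv x g m)"
  by (rule ext) (simp add: mulv_def algebra_simps)
lemma mulv_sum: "mulv x (\<lambda>m. \<Sum>k\<in>S. g k m) = (\<lambda>m. \<Sum>k\<in>S. mulv x (g k) m)"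
  by (rule ext) (simp add: mulv_def)
lemma mulv_zero: "mulv x (\<lambda>m. 0) = (\<lambda>m. 0)"
  by (rule ext) (simp add: mulv_def)
lemma mulv_if: "mulv x (\<lambda>m. if P then g m else 0) = (\<lambda>m. if P then mulv x g m else 0)"
  by (rule ext) (simp add: mulv_def)

lemmas lin_simps = dv_add dv_diff dv_cm dv_sum dv_zero dv_if mulv_add mulv_diff mulv_cm mulv_sum mulv_zero mulv_if

lemma XDXD: "mulv a (dv b (mulv c (dv d f))) m - mulv c (dv d (mulv a (dv b f))) m
  = (if b = c then mulv a (dv d f) m else 0) - (if d = a then mulv c (dv b f) m else 0)"
proof -
  have 1: "mulv a (dv b (mulv c (dv d f))) m = mulv a (mulv c (dv b (dv d f))) m
      + (if b = c then mulv a (dv d f) m else 0)"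
    by (simp add: dx_commf mulv_add mulv_if)
  have 2: "mulv c (dv d (mulv a (dv b f))) m = mulv c (mulv a (dv d (dv b f))) m
      + (if d = a then mulv c (dv b f) m else 0)"
    by (simp add: dx_commf mulv_add mulv_if)
  have 3: "mulv a (mulv c (dv b (dv d f))) m = mulv c (mulv a (dv d (dv b f))) m"
    by (simp add: xx_comm dd_commf)
  show ?thesis using 1 2 3 by simp
qed

lemma DDXD: "dv a (dv b (mulv c (dv d f))) m - mulv c (dv d (dv a (dv b f))) m
  = (if a = c then dv b (dv d f) m else 0) + (if b = c then dv a (dv d f) m else 0)"
proof -
  have 1: "dv a (dv b (mulv c (dv d f))) m = mulv c (dv a (dv b (dv d f))) m
      + (if a = c then dv b (dv d f) m else 0) + (if b = c then dv a (dv d f) m else 0)"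
    by (simp add: dx_commf dv_add dv_if)
  have 3: "dv a (dv b (dv d f)) = dv d (dv a (dv b f))"
    by (metis dd_commf)
  show ?thesis using 1 3 by simp
qed

lemma DDDD: "dv a (dv b (dv c (dv d f))) m = dv c (dv d (dv a (dv b f))) m"
  by (metis dd_commf)

definition wt :: "nat \<Rightarrow> real" where "wt k = (if odd k then real k else 0)"
definition od :: "nat \<Rightarrow> real" where "od k = (if odd k then 1 else 0)"

definition EE :: "(nat \<Rightarrow> dvar) \<Rightarrow> nat \<Rightarrow> nat \<Rightarrow> op" where
  "EE v s B = (\<lambda>f m. \<Sum>k<B. wt k * mulv (v k) (dv (v (k + s)) f) m)"
definition QQ :: "(nat \<Rightarrow> dvar) \<Rightarrow> nat \<Rightarrow> op" where
  "QQ v s = (\<lambda>f m. \<Sum>i<s. od i * dv (v i) (dv (v (s - i)) f) m)"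

lemma EE_EE: "EE u s C (EE v t C f) m - EE v t C (EE u s C f) m
  = (\<Sum>k<C. \<Sum>l<C. wt k * wt l * ((if u (k+s) = v l then mulv (u k) (dv (v (l+t)) f) m else 0)
        - (if v (l+t) = u k then mulv (v l) (dv (u (k+s)) f) m else 0)))"
proof -
  have 1: "EE u s C (EE v t C f) m = (\<Sum>k<C. \<Sum>l<C. wt k * wt l *
      mulv (u k) (dv (u (k+s)) (mulv (v l) (dv (v (l+t)) f))) m)"
    unfolding EE_def by (simp only: lin_simps sum_distrib_left mult.assoc)
  have 2: "EE v t C (EE u s C f) m = (\<Sum>l<C. \<Sum>k<C. wt l * wt k *
      mulv (v l) (dv (v (l+t)) (mulv (u k) (dv (u (k+s)) f))) m)"
    unfolding EE_def by (simp only: lin_simps sum_distrib_left mult.assoc)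
  have 3: "EE v t C (EE u s C f) m = (\<Sum>k<C. \<Sum>l<C. wt k * wt l *
      mulv (v l) (dv (v (l+t)) (mulv (u k) (dv (u (k+s)) f))) m)"
    unfolding 2 by (subst sum.swap) (simp only: mult.commute)
  show ?thesis unfolding 1 3 sum_subtractf[symmetric] right_diff_distrib[symmetric] XDXD ..
qed

lemma QQ_EE: "QQ u s (EE v t C f) m - EE v t C (QQ u s f) m
  = (\<Sum>i<s. \<Sum>l<C. od i * wt l * ((if u i = v l then dv (u (s-i)) (dv (v (l+t)) f) m else 0)
        + (if u (s-i) = v l then dv (u i) (dv (v (l+t)) f) m else 0)))"
proof -
  have 1: "QQ u s (EE v t C f) m = (\<Sum>i<s. \<Sum>l<C. od i * wt l *
      dv (u i) (dv (u (s-i)) (mulv (v l) (dv (v (l+t)) f))) m)"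
    unfolding EE_def QQ_def by (simp only: lin_simps sum_distrib_left mult.assoc)
  have 2: "EE v t C (QQ u s f) m = (\<Sum>l<C. \<Sum>i<s. wt l * od i *
      mulv (v l) (dv (v (l+t)) (dv (u i) (dv (u (s-i)) f))) m)"
    unfolding EE_def QQ_def by (simp only: lin_simps sum_distrib_left mult.assoc)
  have 3: "EE v t C (QQ u s f) m = (\<Sum>i<s. \<Sum>l<C. od i * wt l *
      mulv (v l) (dv (v (l+t)) (dv (u i) (dv (u (s-i)) f))) m)"
    unfolding 2 by (subst sum.swap) (simp only: mult.commute)
  show ?thesis unfolding 1 3 sum_subtractf[symmetric] right_diff_distrib[symmetric] DDXD ..
qed

lemma QQ_QQ: "QQ u s (QQ v t f) m = QQ v t (QQ u s f) m"
proof -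
  have 1: "QQ u s (QQ v t f) m = (\<Sum>i<s. \<Sum>l<t. od i * od l *
      dv (u i) (dv (u (s-i)) (dv (v l) (dv (v (t-l)) f))) m)"
    unfolding QQ_def by (simp only: lin_simps sum_distrib_left mult.assoc)
  have 2: "QQ v t (QQ u s f) m = (\<Sum>l<t. \<Sum>i<s. od l * od i *
      dv (v l) (dv (v (t-l)) (dv (u i) (dv (u (s-i)) f))) m)"
    unfolding QQ_def by (simp only: lin_simps sum_distrib_left mult.assoc)
  show ?thesis unfolding 1 2 DDDD by (subst sum.swap) (simp only: mult.commute)
qed

section \<open>Reflection identity for the quadratic parts\<close>

lemma od_simps: "od k = (if odd k then 1 else 0)" by (simp add: od_def)

lemma sum_od_drop0: "(\<Sum>i<K. od i * g i) = (\<Sum>i\<in>{1..<K}. od i * g i)"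
proof (cases K)
  case 0 then show ?thesis by simp
next
  case (Suc K')
  have "{..<K} = insert 0 {1..<K}" using Suc by auto
  then show ?thesis by (simp add: od_def)
qed

lemma reflect:
  assumes "even K"
  shows "(\<Sum>i<K. od i * g i) = (\<Sum>i<K. od i * g (K - i))"
proof -
  have "(\<Sum>i\<in>{1..<K}. od i * g i) = (\<Sum>i\<in>{1..<K}. od i * g (K - i))"
  proof (rule sum.reindex_bij_witness[where i="\<lambda>i. K - i" and j="\<lambda>i. K - i"])
    fix a assume a: "a \<in> {1..<K}"
    then show "K - (K - a) = a" by auto
    show "K - a \<in> {1..<K}" using a by auto
    have "odd (K - a) \<longleftrightarrow> odd a" using a assms by (auto simp: even_diff_nat)
    then show "od (K - a) * g (K - (K - a)) = od a * g a" using a by (simp add: od_def)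
  qed auto
  then show ?thesis by (simp add: sum_od_drop0)
qed

lemma sum_trunc:
  fixes B C :: nat
  assumes "B \<le> C" "\<And>k. B \<le> k \<Longrightarrow> k < C \<Longrightarrow> g k = 0"
  shows "(\<Sum>k<C. g k) = (\<Sum>k<B. g k)"
proof (rule sum.mono_neutral_right)
  show "\<forall>i\<in>{..<C} - {..<B}. g i = 0"
  proof
    fix i assume "i \<in> {..<C} - {..<B}"
    then have "B \<le> i" "i < C" by auto
    then show "g i = 0" by (rule assms(2))
  qed
qed (use assms(1) in auto)

lemma sum_extend:
  fixes M S :: nat
  assumes "M \<le> S"
  shows "(\<Sum>i<M. h i) = (\<Sum>i<S. if i < M then h i else 0)"
proof -
  have "(\<Sum>i<S. if i < M then h i else 0) = (\<Sum>i<M. if i < M then h i else 0)"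
    by (rule sum_trunc[OF assms]) (auto dest: leD)
  then show ?thesis by simp
qed

lemma gpt:
  fixes M K i :: nat
  assumes "M \<le> K" "odd i" "even M" "even K" "i < M + K"
  defines "g \<equiv> \<lambda>x::nat. (if x < M then 2 * (real M - real x) else 0) - (if x < K then 2 * (real K - real x) else 0)"
  shows "g i + g (M + K - i) = 2 * (real M - real K)"
proof -
  have "i \<noteq> M" "i \<noteq> K" using assms by auto
  then show ?thesis using assms(1,5) unfolding g_def by (auto simp: of_nat_diff)
qed

lemma ABS:
  fixes M K :: nat and P :: "nat \<Rightarrow> real"
  assumes "M \<le> K" "even M" "even K"
    and sym: "\<And>a. a \<le> M + K \<Longrightarrow> P a = P (M + K - a)"
  shows "(\<Sum>i<M. od i * (wt i * P (M - i) + wt (M - i) * P i))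
       - (\<Sum>i<K. od i * (wt i * P (K - i) + wt (K - i) * P i))
       = (real M - real K) * (\<Sum>i<M+K. od i * P i)"
proof -
  define S where "S = M + K"
  have A: "(\<Sum>i<L. od i * (wt i * P (L - i) + wt (L - i) * P i)) = (\<Sum>i<L. od i * (2 * (real L - real i) * P i))"
    if "even L" for L
  proof -
    have "(\<Sum>i<L. od i * (wt i * P (L - i))) = (\<Sum>i<L. od i * (wt (L - i) * P (L - (L - i))))"
      by (rule reflect[OF that])
    also have "\<dots> = (\<Sum>i<L. od i * (wt (L - i) * P i))"
      by (rule sum.cong) auto
    finally have 1: "(\<Sum>i<L. od i * (wt i * P (L - i))) = (\<Sum>i<L. od i * (wt (L - i) * P i))" .
    have 2: "od i * (wt (L - i) * P i) = od i * ((real L - real i) * P i)" if "i < L" for i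
      using that \<open>even L\<close> by (auto simp: od_def wt_def even_diff_nat of_nat_diff)
    have "(\<Sum>i<L. od i * (wt i * P (L - i) + wt (L - i) * P i))
        = (\<Sum>i<L. od i * (wt i * P (L - i))) + (\<Sum>i<L. od i * (wt (L - i) * P i))"
      by (simp add: distrib_left sum.distrib)
    also have "\<dots> = 2 * (\<Sum>i<L. od i * (wt (L - i) * P i))" using 1 by simp
    also have "\<dots> = 2 * (\<Sum>i<L. od i * ((real L - real i) * P i))"
      by (intro arg_cong[where f="\<lambda>x. 2 * x"] sum.cong refl) (simp add: 2)
    finally show ?thesis by (simp add: sum_distrib_left algebra_simps)
  qed
  define g where "g \<equiv> \<lambda>x::nat. (if x < M then 2 * (real M - real x) else 0) - (if x < K then 2 * (real K - real x) else 0)"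
  have L: "(\<Sum>i<M. od i * (wt i * P (M - i) + wt (M - i) * P i))
       - (\<Sum>i<K. od i * (wt i * P (K - i) + wt (K - i) * P i)) = (\<Sum>i<S. od i * (g i * P i))"
  proof -
    have "(\<Sum>i<M. od i * (2 * (real M - real i) * P i)) = (\<Sum>i<S. if i < M then od i * (2 * (real M - real i) * P i) else 0)"
      by (rule sum_extend) (simp add: S_def)
    moreover have "(\<Sum>i<K. od i * (2 * (real K - real i) * P i)) = (\<Sum>i<S. if i < K then od i * (2 * (real K - real i) * P i) else 0)"
      by (rule sum_extend) (simp add: S_def)
    moreover have "(\<Sum>i<S. od i * (g i * P i)) = (\<Sum>i<S. if i < M then od i * (2 * (real M - real i) * P i) else 0)
       - (\<Sum>i<S. if i < K then od i * (2 * (real K - real i) * P i) else 0)"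
      unfolding sum_subtractf[symmetric] g_def by (rule sum.cong) (auto simp: algebra_simps)
    ultimately show ?thesis
      unfolding A[OF \<open>even M\<close>] A[OF \<open>even K\<close>] by simp
  qed
  have R: "(\<Sum>i<S. od i * (g i * P i)) = (\<Sum>i<S. od i * (g (S - i) * P i))"
  proof -
    have "(\<Sum>i<S. od i * (g i * P i)) = (\<Sum>i<S. od i * (g (S - i) * P (S - i)))"
      by (rule reflect) (simp add: S_def \<open>even M\<close> \<open>even K\<close>)
    also have "\<dots> = (\<Sum>i<S. od i * (g (S - i) * P i))"
    proof (rule sum.cong)
      fix i assume "i \<in> {..<S}"
      then have "P (S - i) = P i" using sym[of i] by (simp add: S_def)
      then show "od i * (g (S - i) * P (S - i)) = od i * (g (S - i) * P i)" by simp
    qed simp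
    finally show ?thesis .
  qed
  have "2 * (\<Sum>i<S. od i * (g i * P i)) = (\<Sum>i<S. od i * ((g i + g (S - i)) * P i))"
    by (subst mult_2, subst (2) R) (simp add: sum.distrib[symmetric] algebra_simps)
  also have "\<dots> = (\<Sum>i<S. od i * (2 * (real M - real K) * P i))"
  proof (rule sum.cong)
    fix i assume i: "i \<in> {..<S}"
    show "od i * ((g i + g (S - i)) * P i) = od i * (2 * (real M - real K) * P i)"
    proof (cases "odd i")
      case True
      then show ?thesis using gpt[of M K i] i assms(1-3) unfolding g_def S_def by simp
    qed (simp add: od_def)
  qed simp
  also have "\<dots> = 2 * ((real M - real K) * (\<Sum>i<S. od i * P i))"
    by (simp add: sum_distrib_left algebra_simps)
  finally show ?thesis using L unfolding S_def by simp
qed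

section \<open>Bounds and locality\<close>

definition bnd :: "nat \<Rightarrow> (dvar \<Rightarrow>\<^sub>0 nat) \<Rightarrow> bool" where
  "bnd B m \<longleftrightarrow> (\<forall>k\<ge>B. Poly_Mapping.lookup m (Tv k) = 0 \<and> Poly_Mapping.lookup m (Th k) = 0)"

definition isv :: "(nat \<Rightarrow> dvar) \<Rightarrow> bool" where "isv v \<longleftrightarrow> v = Tv \<or> v = Th"

definition loc :: "nat \<Rightarrow> fps \<Rightarrow> fps \<Rightarrow> bool" where
  "loc C g g' \<longleftrightarrow> (\<forall>m. bnd C m \<longrightarrow> g m = g' m)"

fun idx :: "dvar \<Rightarrow> nat" where "idx (Tv k) = k" | "idx (Th k) = k"

lemma bnd_ex: "\<exists>B. bnd B m"
proof -
  define B where "B = Suc (\<Sum>x\<in>Poly_Mapping.keys m. idx x)"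
  have "Poly_Mapping.lookup m x = 0" if "B \<le> idx x" for x
  proof (rule ccontr)
    assume "Poly_Mapping.lookup m x \<noteq> 0"
    then have "x \<in> Poly_Mapping.keys m" by (simp add: in_keys_iff)
    then have "idx x \<le> (\<Sum>x\<in>Poly_Mapping.keys m. idx x)" by (intro member_le_sum) auto
    then show False using that unfolding B_def by simp
  qed
  then have "bnd B m" unfolding bnd_def by (metis idx.simps)
  then show ?thesis ..
qed

lemma bnd_mono: "bnd B m \<Longrightarrow> B \<le> C \<Longrightarrow> bnd C m"
  unfolding bnd_def by auto

lemma isv_inj: "isv v \<Longrightarrow> v a = v b \<longleftrightarrow> a = b"
  unfolding isv_def by auto

lemma bnd_v: "bnd B m \<Longrightarrow> isv v \<Longrightarrow> B \<le> k \<Longrightarrow> Poly_Mapping.lookup m (v k) = 0"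
  unfolding bnd_def isv_def by auto

lemma bnd_add: "bnd C m \<Longrightarrow> isv v \<Longrightarrow> k < C \<Longrightarrow> bnd C (m + Poly_Mapping.single (v k) 1)"
  unfolding bnd_def isv_def by (auto simp: lookup_add lookup_single when_def)

lemma bnd_add': "bnd C m \<Longrightarrow> isv v \<Longrightarrow> k < C \<Longrightarrow> bnd C (m + Poly_Mapping.single (v k) (Suc 0))"
  using bnd_add by simp

lemma bnd_upd: "bnd C m \<Longrightarrow> bnd C (Poly_Mapping.update x (Poly_Mapping.lookup m x - 1) m)"
  unfolding bnd_def by (auto simp: lookup_update)

lemma bnd_upd': "bnd C m \<Longrightarrow> bnd C (Poly_Mapping.update x (Poly_Mapping.lookup m x - Suc 0) m)"
  using bnd_upd by simp

lemma mulv_out: "Poly_Mapping.lookup m x = 0 \<Longrightarrow> mulv x g m = 0"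
  by (simp add: mulv_def)

lemma loc_dv: "loc C g g' \<Longrightarrow> isv v \<Longrightarrow> k < C \<Longrightarrow> loc C (dv (v k) g) (dv (v k) g')"
  unfolding loc_def dv_def by (auto simp: bnd_add')

lemma loc_mulv: "loc C g g' \<Longrightarrow> loc C (mulv x g) (mulv x g')"
  unfolding loc_def mulv_def by (auto simp: bnd_upd')

lemma EE_loc:
  assumes "isv v" "bnd B m" "B + s \<le> C" "loc C g g'"
  shows "EE v s B g m = EE v s B g' m"
  unfolding EE_def
proof (rule sum.cong)
  fix k assume "k \<in> {..<B}"
  then have "loc C (mulv (v k) (dv (v (k + s)) g)) (mulv (v k) (dv (v (k + s)) g'))"
    using assms by (intro loc_mulv loc_dv) auto
  moreover have "bnd C m" using assms bnd_mono by auto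
  ultimately show "wt k * mulv (v k) (dv (v (k + s)) g) m = wt k * mulv (v k) (dv (v (k + s)) g') m"
    unfolding loc_def by auto
qed simp

lemma QQ_loc:
  assumes "isv v" "bnd C m" "s < C" "loc C g g'"
  shows "QQ v s g m = QQ v s g' m"
  unfolding QQ_def
proof (rule sum.cong)
  fix i assume "i \<in> {..<s}"
  then have "loc C (dv (v i) (dv (v (s - i)) g)) (dv (v i) (dv (v (s - i)) g'))"
    using assms by (intro loc_dv) auto
  then show "od i * dv (v i) (dv (v (s - i)) g) m = od i * dv (v i) (dv (v (s - i)) g') m"
    using assms unfolding loc_def by auto
qed simp

lemma EE_ext:
  assumes "isv v" "bnd B m" "B \<le> C"
  shows "EE v s C g m = EE v s B g m"
  unfolding EE_def
  by (rule sum_trunc[OF assms(3)]) (simp add: mulv_out bnd_v[OF assms(2,1)])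

definition Vs :: "(nat \<Rightarrow> dvar) \<Rightarrow> nat \<Rightarrow> nat \<Rightarrow> nat \<Rightarrow> op" where
  "Vs v M j B = (\<lambda>f m. 1 / real M * QQ v (M * j) f m + 1 / real M * EE v (M * j) B f m)"

lemma Vs_loc:
  assumes "isv v" "bnd B m" "B + M * j \<le> C" "M * j < C" "loc C g g'"
  shows "Vs v M j B g m = Vs v M j B g' m"
  unfolding Vs_def using EE_loc[OF assms(1,2,3,5)] QQ_loc[OF assms(1) _ assms(4,5)]
    bnd_mono[OF assms(2)] assms(3) by auto

lemma Vs_ext:
  assumes "isv v" "bnd B m" "B \<le> C"
  shows "Vs v M j C g m = Vs v M j B g m"
  unfolding Vs_def using EE_ext[OF assms] by simp

lemma QQ_lin: "QQ v s (\<lambda>m. a * g m + b * h m) m0 = a * QQ v s g m0 + b * QQ v s h m0"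
  unfolding QQ_def by (simp add: lin_simps sum.distrib sum_distrib_left algebra_simps)

lemma EE_lin: "EE v s B (\<lambda>m. a * g m + b * h m) m0 = a * EE v s B g m0 + b * EE v s B h m0"
  unfolding EE_def by (simp add: lin_simps sum.distrib sum_distrib_left algebra_simps)

lemma Vs_add: "Vs v M j B (\<lambda>m. g m + h m) m0 = Vs v M j B g m0 + Vs v M j B h m0"
  using QQ_lin[of v "M*j" 1 g 1 h m0] EE_lin[of v "M*j" B 1 g 1 h m0]
  unfolding Vs_def by (simp add: algebra_simps)

lemma delta2: fixes c F G :: "nat \<Rightarrow> real" shows "finite S \<Longrightarrow> (\<Sum>l\<in>S. c l * ((if a = l then F l else 0) + (if b = l then G l else 0)))
   = (if a \<in> S then c a * F a else 0) + (if b \<in> S then c b * G b else 0)"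
proof -
  assume S: "finite S"
  have "(\<Sum>l\<in>S. c l * ((if a = l then F l else 0) + (if b = l then G l else 0)))
     = (\<Sum>l\<in>S. (if a = l then c l * F l else 0) + (if b = l then c l * G l else 0))"
    by (rule sum.cong) (auto simp: distrib_left)
  also have "\<dots> = (\<Sum>l\<in>S. if a = l then c l * F l else 0) + (\<Sum>l\<in>S. if b = l then c l * G l else 0)"
    by (rule sum.distrib)
  finally show ?thesis using S by (simp add: sum.delta distrib_left)
qed

lemma QE_same:
  assumes v: "isv v" and sC: "s < C"
  shows "QQ v s (EE v t C f) m - EE v t C (QQ v s f) m
    = (\<Sum>i<s. od i * (wt i * dv (v (s - i)) (dv (v (s + t - (s - i))) f) m
                      + wt (s - i) * dv (v i) (dv (v (s + t - i)) f) m))"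
proof -
  have "QQ v s (EE v t C f) m - EE v t C (QQ v s f) m
     = (\<Sum>i<s. od i * (\<Sum>l<C. wt l * ((if i = l then dv (v (s-i)) (dv (v (l+t)) f) m else 0)
        + (if s - i = l then dv (v i) (dv (v (l+t)) f) m else 0))))"
    unfolding QQ_EE isv_inj[OF v] by (simp add: sum_distrib_left mult.assoc)
  also have "\<dots> = (\<Sum>i<s. od i * (wt i * dv (v (s - i)) (dv (v (s + t - (s - i))) f) m
                      + wt (s - i) * dv (v i) (dv (v (s + t - i)) f) m))"
  proof (rule sum.cong)
    fix i assume i: "i \<in> {..<s}"
    have "s + t - (s - i) = i + t" "s + t - i = s - i + t" using i by auto
    then show "od i * (\<Sum>l<C. wt l * ((if i = l then dv (v (s-i)) (dv (v (l+t)) f) m else 0)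
        + (if s - i = l then dv (v i) (dv (v (l+t)) f) m else 0)))
      = od i * (wt i * dv (v (s - i)) (dv (v (s + t - (s - i))) f) m
                      + wt (s - i) * dv (v i) (dv (v (s + t - i)) f) m)"
      using i sC by (subst delta2) (auto simp: add.commute[of t i])
  qed simp
  finally show ?thesis .
qed

lemma EE_same:
  assumes v: "isv v" and B: "bnd B m" and C: "B + s + t \<le> C" and ev: "even s" "even t"
  shows "EE v s C (EE v t C f) m - EE v t C (EE v s C f) m = (real s - real t) * EE v (s + t) B f m"
proof -
  define XD where "XD = (\<lambda>k l. mulv (v k) (dv (v l) f) m)"
  have 1: "(\<Sum>k<C. \<Sum>l<C. wt k * wt l * (if k + s = l then XD k (l + t) else 0))
      = (\<Sum>k<C. if k + s < C then wt k * wt (k + s) * XD k (k + s + t) else 0)"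
  proof (rule sum.cong)
    fix k
    have "(\<Sum>l<C. wt k * wt l * (if k + s = l then XD k (l + t) else 0))
        = (\<Sum>l<C. if k + s = l then wt k * wt l * XD k (l + t) else 0)"
      by (rule sum.cong) auto
    then show "(\<Sum>l<C. wt k * wt l * (if k + s = l then XD k (l + t) else 0))
      = (if k + s < C then wt k * wt (k + s) * XD k (k + s + t) else 0)"
      by (simp add: sum.delta)
  qed simp
  have 2: "(\<Sum>k<C. \<Sum>l<C. wt k * wt l * (if l + t = k then XD l (k + s) else 0))
      = (\<Sum>l<C. if l + t < C then wt (l + t) * wt l * XD l (l + t + s) else 0)"
  proof -
    have "(\<Sum>k<C. \<Sum>l<C. wt k * wt l * (if l + t = k then XD l (k + s) else 0))
       = (\<Sum>l<C. \<Sum>k<C. wt k * wt l * (if l + t = k then XD l (k + s) else 0))"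
      by (rule sum.swap)
    also have "\<dots> = (\<Sum>l<C. if l + t < C then wt (l + t) * wt l * XD l (l + t + s) else 0)"
    proof (rule sum.cong)
      fix l
      have "(\<Sum>k<C. wt k * wt l * (if l + t = k then XD l (k + s) else 0))
          = (\<Sum>k<C. if l + t = k then wt k * wt l * XD l (k + s) else 0)"
        by (rule sum.cong) auto
      then show "(\<Sum>k<C. wt k * wt l * (if l + t = k then XD l (k + s) else 0))
        = (if l + t < C then wt (l + t) * wt l * XD l (l + t + s) else 0)"
        by (simp add: sum.delta)
    qed simp
    finally show ?thesis .
  qed
  have "EE v s C (EE v t C f) m - EE v t C (EE v s C f) m
     = (\<Sum>k<C. \<Sum>l<C. wt k * wt l * (if k + s = l then XD k (l + t) else 0))
     - (\<Sum>k<C. \<Sum>l<C. wt k * wt l * (if l + t = k then XD l (k + s) else 0))"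
    unfolding EE_EE isv_inj[OF v] XD_def
    by (simp add: sum_subtractf[symmetric] right_diff_distrib)
  also have "\<dots> = (\<Sum>k<C. (if k + s < C then wt k * wt (k + s) * XD k (k + s + t) else 0)
       - (if k + t < C then wt (k + t) * wt k * XD k (k + t + s) else 0))"
    unfolding 1 2 sum_subtractf ..
  also have "\<dots> = (\<Sum>k<B. (if k + s < C then wt k * wt (k + s) * XD k (k + s + t) else 0)
       - (if k + t < C then wt (k + t) * wt k * XD k (k + t + s) else 0))"
    using C by (intro sum_trunc) (auto simp: XD_def mulv_out bnd_v[OF B v])
  also have "\<dots> = (\<Sum>k<B. (real s - real t) * (wt k * mulv (v k) (dv (v (k + (s + t))) f) m))"
  proof (rule sum.cong)
    fix k assume k: "k \<in> {..<B}"
    then have "k + s < C" "k + t < C" using C by auto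
    moreover have e1: "k + s + t = k + (s + t)" and e2: "k + t + s = k + (s + t)" by auto
    moreover have w: "wt k * wt (k + s) - wt (k + t) * wt k = (real s - real t) * wt k"
      using ev by (auto simp: wt_def algebra_simps)
    moreover have "\<And>X. wt k * wt (k + s) * X - wt (k + t) * wt k * X = (real s - real t) * (wt k * X)"
      using w by (metis left_diff_distrib mult.assoc)
    ultimately show "(if k + s < C then wt k * wt (k + s) * XD k (k + s + t) else 0)
       - (if k + t < C then wt (k + t) * wt k * XD k (k + t + s) else 0)
       = (real s - real t) * (wt k * mulv (v k) (dv (v (k + (s + t))) f) m)"
      unfolding XD_def e1 e2 by simp
  qed simp
  also have "\<dots> = (real s - real t) * EE v (s + t) B f m"
    unfolding EE_def by (simp add: sum_distrib_left)
  finally show ?thesis .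
qed

lemma SP:
  assumes v: "isv v" and M: "even M" "0 < M" and j: "1 \<le> j" and B: "bnd B m"
    and C: "B + M * (j + 1) \<le> C" "M * (j + 1) < C"
  shows "Vs v M 1 C (Vs v M j C f) m - Vs v M j C (Vs v M 1 C f) m = (1 - real j) * Vs v M (j + 1) B f m"
proof -
  define K where "K = M * j"
  have MK: "M * (j + 1) = M + K" unfolding K_def by (simp add: algebra_simps)
  have evK: "even K" unfolding K_def using M by simp
  have MleK: "M \<le> K" unfolding K_def using j by simp
  define a1 where "a1 = QQ v M (QQ v K f) m"
  define a2 where "a2 = QQ v M (EE v K C f) m"
  define a3 where "a3 = EE v M C (QQ v K f) m"
  define a4 where "a4 = EE v M C (EE v K C f) m"
  define b1 where "b1 = QQ v K (QQ v M f) m"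
  define b2 where "b2 = QQ v K (EE v M C f) m"
  define b3 where "b3 = EE v K C (QQ v M f) m"
  define b4 where "b4 = EE v K C (EE v M C f) m"
  have L1: "Vs v M 1 C (Vs v M j C f) m = 1 / real M * (1 / real M * a1 + 1 / real M * a2)
      + 1 / real M * (1 / real M * a3 + 1 / real M * a4)"
    unfolding Vs_def a1_def a2_def a3_def a4_def K_def by (simp only: QQ_lin EE_lin mult_1_right)
  have L2: "Vs v M j C (Vs v M 1 C f) m = 1 / real M * (1 / real M * b1 + 1 / real M * b2)
      + 1 / real M * (1 / real M * b3 + 1 / real M * b4)"
    unfolding Vs_def b1_def b2_def b3_def b4_def K_def by (simp only: QQ_lin EE_lin mult_1_right)
  have R: "Vs v M (j + 1) B f m = 1 / real M * QQ v (M + K) f m + 1 / real M * EE v (M + K) B f m"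
    unfolding Vs_def MK ..
  define P where "P = (\<lambda>a. dv (v a) (dv (v (M + K - a)) f) m)"
  have e1: "a1 = b1" unfolding a1_def b1_def by (rule QQ_QQ)
  have X1: "a2 - b3 = (\<Sum>i<M. od i * (wt i * P (M - i) + wt (M - i) * P i))"
    unfolding a2_def b3_def P_def using C MK by (subst QE_same[OF v]) auto
  have X2: "b2 - a3 = (\<Sum>i<K. od i * (wt i * P (K - i) + wt (K - i) * P i))"
    unfolding b2_def a3_def P_def using C MK by (subst QE_same[OF v]) (auto simp: add.commute)
  have Y: "a4 - b4 = (real M - real K) * EE v (M + K) B f m"
    unfolding a4_def b4_def using C MK M evK by (intro EE_same[OF v B]) auto
  have sym: "P a = P (M + K - a)" if "a \<le> M + K" for a
    unfolding P_def using that by (simp add: dd_comm)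
  have Q: "(\<Sum>i<M. od i * (wt i * P (M - i) + wt (M - i) * P i))
       - (\<Sum>i<K. od i * (wt i * P (K - i) + wt (K - i) * P i))
       = (real M - real K) * QQ v (M + K) f m"
    by (subst ABS[where P=P, OF MleK M(1) evK sym]) (simp_all add: QQ_def P_def)
  have "Vs v M 1 C (Vs v M j C f) m - Vs v M j C (Vs v M 1 C f) m
     = 1 / (real M * real M) * ((a2 - b3) - (b2 - a3) + (a4 - b4))"
    unfolding L1 L2 e1 using M by (simp add: field_simps)
  also have "\<dots> = 1 / (real M * real M) * ((real M - real K) * (QQ v (M + K) f m + EE v (M + K) B f m))"
  proof -
    have "(a2 - b3) - (b2 - a3) = (real M - real K) * QQ v (M + K) f m"
      unfolding X1 X2 Q ..
    then show ?thesis unfolding Y by (simp only: distrib_left)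
  qed
  also have "\<dots> = (1 - real j) * Vs v M (j + 1) B f m"
    unfolding R K_def using M by (simp add: field_simps)
  finally show ?thesis .
qed

lemma XS:
  assumes uv: "\<And>k l. u k \<noteq> v l"
  shows "Vs u M a C (Vs v M' b C f) m = Vs v M' b C (Vs u M a C f) m"
proof -
  have uv': "\<And>k l. v l \<noteq> u k" using uv by metis
  have 1: "QQ u s (QQ v t f) m = QQ v t (QQ u s f) m" for s t by (rule QQ_QQ)
  have 2: "QQ u s (EE v t C f) m = EE v t C (QQ u s f) m" for s t
    using QQ_EE[of u s v t C f m] by (simp add: uv uv')
  have 3: "EE u s C (QQ v t f) m = QQ v t (EE u s C f) m" for s t
    using QQ_EE[of v t u s C f m] by (simp add: uv uv')
  have 4: "EE u s C (EE v t C f) m = EE v t C (EE u s C f) m" for s t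
    using EE_EE[of u s C v t f m] by (simp add: uv uv')
  show ?thesis unfolding Vs_def by (simp only: QQ_lin EE_lin 1 2 3 4) (simp add: algebra_simps)
qed

section \<open>Normal form of the Virasoro operators\<close>

definition Gf :: "(nat \<Rightarrow> dvar) \<Rightarrow> int \<Rightarrow> fps \<Rightarrow> (dvar \<Rightarrow>\<^sub>0 nat) \<Rightarrow> int \<Rightarrow> real" where
  "Gf v s f m k = (if 0 < k \<and> 0 < k + s \<and> odd k
     then 2 * real_of_int k * mulv (v (nat k)) (dv (v (nat (k + s))) f) m else 0)"

definition Hf :: "(nat \<Rightarrow> dvar) \<Rightarrow> int \<Rightarrow> fps \<Rightarrow> (dvar \<Rightarrow>\<^sub>0 nat) \<Rightarrow> int \<Rightarrow> real" where
  "Hf v s f m i = (if 0 < i \<and> i < s \<and> odd i then 4 * dv (v (nat i)) (dv (v (nat (s - i))) f) m else 0)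
     + (if s < i \<and> i < 0 \<and> odd i then real_of_int (- i) * real_of_int (i - s)
          * mulv (v (nat (- i))) (mulv (v (nat (i - s))) f) m else 0)"

lemma pop_even: "even a \<Longrightarrow> pop v a f = (\<lambda>m. 0)"
  by (rule ext) (simp add: pop_def)
lemma pop_pos: "odd a \<Longrightarrow> 0 < a \<Longrightarrow> pop v a f = (\<lambda>m. 2 * dv (v (nat a)) f m)"
  by (rule ext) (simp add: pop_def)
lemma pop_neg: "odd a \<Longrightarrow> a < 0 \<Longrightarrow> pop v a f = (\<lambda>m. real (nat (- a)) * mulv (v (nat (- a))) f m)"
  by (rule ext) (simp add: pop_def)

lemma nop_dec:
  assumes s: "even s"
  shows "nop v i (s - i) f m = Gf v s f m (i - s) + Gf v s f m (- i) + Hf v s f m i"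
proof (cases "even i")
  case True
  then have "even (s - i)" using s by simp
  then show ?thesis using True s by (simp add: nop_def pop_even pop_def Gf_def Hf_def)
next
  case odd: False
  then have odd2: "odd (s - i)" "odd (i - s)" using s by auto
  have i0: "i \<noteq> 0" "s - i \<noteq> 0" using odd odd2 by auto
  consider "0 < i" "s - i < 0" | "i < 0" "0 < s - i" | "0 < i" "0 < s - i" | "i < 0" "s - i < 0"
    using i0 by linarith
  then show ?thesis
  proof cases
    case 1
    then show ?thesis using odd odd2
      by (simp add: nop_def pop_pos pop_neg pop_def Gf_def Hf_def mulv_cm)
  next
    case 2
    then show ?thesis using odd odd2
      by (simp add: nop_def pop_pos pop_neg pop_def Gf_def Hf_def mulv_cm)
  next
    case 3
    then show ?thesis using odd odd2
      by (simp add: nop_def pop_pos pop_neg pop_def Gf_def Hf_def dv_cm)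
  next
    case 4
    then show ?thesis using odd odd2
      by (simp add: nop_def pop_pos pop_neg pop_def Gf_def Hf_def mulv_cm)
  qed
qed


lemma Sum_any_cmult: "Sum_any (\<lambda>i. (c::real) * g i) = c * Sum_any g"
proof (cases "c = 0")
  case False
  then have "{i. c * g i \<noteq> 0} = {i. g i \<noteq> 0}" by auto
  then show ?thesis by (simp add: Sum_any.expand_set sum_distrib_left)
qed simp

lemma Gf_supp:
  assumes v: "isv v" and B: "bnd B m"
  shows "{k. Gf v s f m k \<noteq> 0} \<subseteq> int ` {..<B}"
proof
  fix k assume "k \<in> {k. Gf v s f m k \<noteq> 0}"
  then have k: "0 < k" "mulv (v (nat k)) (dv (v (nat (k + s))) f) m \<noteq> 0"
    by (auto simp: Gf_def split: if_splits)
  then have "Poly_Mapping.lookup m (v (nat k)) \<noteq> 0" using mulv_out by metis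
  then have "nat k < B" using bnd_v[OF B v] not_le by metis
  then show "k \<in> int ` {..<B}" using k(1) by (intro image_eqI[of _ _ "nat k"]) auto
qed

lemma Hf_supp: "{i. Hf v s f m i \<noteq> 0} \<subseteq> {-\<bar>s\<bar>..\<bar>s\<bar>}"
  by (auto simp: Hf_def split: if_splits)


lemma Sum_any_Gf:
  assumes v: "isv v" and B: "bnd B m"
  shows "Sum_any (Gf v s f m) = (\<Sum>k<B. Gf v s f m (int k))"
proof -
  have "Sum_any (Gf v s f m) = sum (Gf v s f m) (int ` {..<B})"
    by (rule Sum_any.expand_superset[OF _ Gf_supp[OF v B]]) simp
  also have "\<dots> = (\<Sum>k<B. Gf v s f m (int k))"
    by (subst sum.reindex) auto
  finally show ?thesis .
qed


lemma W_dec: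
  assumes v: "isv v" and B: "bnd B m" and s: "even s"
  shows "Sum_any (\<lambda>i. nop v i (s - i) f m) = 2 * (\<Sum>k<B. Gf v s f m (int k)) + Sum_any (Hf v s f m)"
proof -
  let ?G = "Gf v s f m" and ?H = "Hf v s f m"
  have fG: "finite {k. ?G k \<noteq> 0}" by (rule finite_subset[OF Gf_supp[OF v B]]) simp
  have fH: "finite {k. ?H k \<noteq> 0}" by (rule finite_subset[OF Hf_supp]) simp
  have f1: "finite {i. ?G (i - s) \<noteq> 0}"
    using finite_vimageI[OF fG, of "\<lambda>i. i - s"] by (simp add: vimage_def inj_def)
  have f2: "finite {i. ?G (- i) \<noteq> 0}"
    using finite_vimageI[OF fG, of "uminus"] by (simp add: vimage_def inj_def)
  have f12: "finite {i. ?G (i - s) + ?G (- i) \<noteq> 0}"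
    by (rule finite_subset[OF _ finite_UnI[OF f1 f2]]) (simp add: subset_iff)
  have b1: "bij (\<lambda>i::int. i - s)"
    by (rule o_bij[where g="\<lambda>i. i + s"]) (auto simp: o_def)
  have b2: "bij (uminus :: int \<Rightarrow> int)"
    by (rule o_bij[where g="uminus"]) (auto simp: o_def)
  have r1: "Sum_any (\<lambda>i. ?G (i - s)) = Sum_any ?G"
    by (rule Sum_any.reindex_cong[OF b1, symmetric]) (simp add: o_def)
  have r2: "Sum_any (\<lambda>i. ?G (- i)) = Sum_any ?G"
    by (rule Sum_any.reindex_cong[OF b2, symmetric]) (simp add: o_def)
  have "Sum_any (\<lambda>i. nop v i (s - i) f m) = Sum_any (\<lambda>i. (?G (i - s) + ?G (- i)) + ?H i)"
    by (rule Sum_any.cong) (rule nop_dec[OF s])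
  also have "\<dots> = Sum_any (\<lambda>i. ?G (i - s) + ?G (- i)) + Sum_any ?H"
    by (rule Sum_any.distrib[OF f12 fH])
  also have "Sum_any (\<lambda>i. ?G (i - s) + ?G (- i)) = Sum_any (\<lambda>i. ?G (i - s)) + Sum_any (\<lambda>i. ?G (- i))"
    by (rule Sum_any.distrib[OF f1 f2])
  finally show ?thesis unfolding r1 r2 Sum_any_Gf[OF v B] by (simp only: mult_2)
qed

lemma Gsum_pos: "(\<Sum>k<B. Gf v (int s) f m (int k)) = 2 * EE v s B f m"
  unfolding EE_def sum_distrib_left
proof (rule sum.cong)
  fix k assume "k \<in> {..<B}"
  show "Gf v (int s) f m (int k) = 2 * (wt k * mulv (v k) (dv (v (k + s)) f) m)"
  proof (cases "odd k")
    case True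
    then have "0 < k" by (cases k) auto
    then show ?thesis using True by (simp add: Gf_def wt_def nat_add_distrib)
  qed (simp add: Gf_def wt_def)
qed simp

lemma Hsum_pos: "Sum_any (Hf v (int s) f m) = 4 * QQ v s f m"
proof -
  have "Sum_any (Hf v (int s) f m) = sum (Hf v (int s) f m) (int ` {..<s})"
  proof (rule Sum_any.expand_superset)
    show "{a. Hf v (int s) f m a \<noteq> 0} \<subseteq> int ` {..<s}"
    proof
      fix i assume "i \<in> {a. Hf v (int s) f m a \<noteq> 0}"
      then have "0 < i" "i < int s" by (auto simp: Hf_def split: if_splits)
      then show "i \<in> int ` {..<s}" by (intro image_eqI[of _ _ "nat i"]) auto
    qed
  qed simp
  also have "\<dots> = (\<Sum>i<s. Hf v (int s) f m (int i))"
    by (subst sum.reindex) auto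
  also have "\<dots> = 4 * QQ v s f m"
    unfolding QQ_def sum_distrib_left
  proof (rule sum.cong)
    fix i assume i: "i \<in> {..<s}"
    show "Hf v (int s) f m (int i) = 4 * (od i * dv (v i) (dv (v (s - i)) f) m)"
    proof (cases "odd i")
      case True
      then have "0 < i" by (cases i) auto
      moreover have "nat (int s - int i) = s - i" using i by auto
      ultimately show ?thesis using True i by (simp add: Hf_def od_def)
    qed (simp add: Hf_def od_def)
  qed simp
  finally show ?thesis .
qed

lemma VN:
  assumes n: "2 \<le> n" and j: "1 \<le> j" and B: "bnd B m"
  shows "Vop n (int j) f m = Vs Tv (2 * n - 2) j B f m + Vs Th 2 j B f m"
proof -
  have vT: "isv Tv" and vH: "isv Th" by (simp_all add: isv_def)
  have sT: "(2 * int n - 2) * int j = int ((2 * n - 2) * j)" using n by (simp add: of_nat_diff)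
  have sH: "2 * int j = int (2 * j)" by simp
  have eT: "even (int ((2 * n - 2) * j))" using n by (simp add: even_diff_nat)
  have eH: "even (int (2 * j))" by simp
  have WT: "Sum_any (\<lambda>i. nop Tv i ((2 * int n - 2) * int j - i) f m)
      = 4 * EE Tv ((2 * n - 2) * j) B f m + 4 * QQ Tv ((2 * n - 2) * j) f m"
    unfolding sT W_dec[OF vT B eT] Gsum_pos Hsum_pos by simp
  have WH: "Sum_any (\<lambda>i. nop Th i (2 * int j - i) f m)
      = 4 * EE Th (2 * j) B f m + 4 * QQ Th (2 * j) f m"
    unfolding sH W_dec[OF vH B eH] Gsum_pos Hsum_pos by simp
  have r: "real (2 * n - 2) = 2 * real n - 2" using n by (simp add: of_nat_diff)
  have n1: "2 * real n - 2 \<noteq> 0" using n by simp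
  have c: "1 / (8 * real n - 8) * (4 * a + 4 * b) = 1 / (2 * real n - 2) * b + 1 / (2 * real n - 2) * a"
    for a b :: real
  proof -
    have g: "1 / (4 * x) * (4 * a + 4 * b) = 1 / x * b + 1 / x * a" if "x \<noteq> 0" for x :: real
      using that by (simp add: field_simps)
    have "8 * real n - 8 = 4 * (2 * real n - 2)" by simp
    then show ?thesis using g[OF n1] by simp
  qed
  show ?thesis
    unfolding Vop_def Sum_any_cmult WT WH Vs_def r c using j by simp
qed

lemma CM:
  assumes n: "2 \<le> n" and j: "2 \<le> j"
  shows "comm (Vop n 1) (Vop n (int j)) f m = (1 - real j) * Vop n (int (j + 1)) f m"
proof -
  obtain B where B: "bnd B m" using bnd_ex by blast
  define N where "N = 2 * n - 2"
  have N: "even N" "0 < N" using n unfolding N_def by auto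
  define C where "C = B + N * (j + 1) + 2 * (j + 1) + 1"
  have vT: "isv Tv" and vH: "isv Th" by (simp_all add: isv_def)
  have BC: "B \<le> C" unfolding C_def by simp
  have bC: "bnd C m" using bnd_mono[OF B BC] .
  have dj: "\<And>k l. Tv k \<noteq> Th l" "\<And>k l. Th k \<noteq> Tv l" by auto
  define gj where "gj = (\<lambda>m'. Vs Tv N j C f m' + Vs Th 2 j C f m')"
  define g1 where "g1 = (\<lambda>m'. Vs Tv N 1 C f m' + Vs Th 2 1 C f m')"
  have lj: "loc C (Vop n (int j) f) gj"
    unfolding loc_def gj_def N_def using VN[OF n] j by simp
  have l1: "loc C (Vop n 1 f) g1"
    unfolding loc_def g1_def N_def using VN[OF n, of 1] by simp
  have V1: "Vop n 1 g m = Vs Tv N 1 B g m + Vs Th 2 1 B g m" for g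
    using VN[OF n order.refl B, of g] unfolding N_def by simp
  have Vj: "Vop n (int j) g m = Vs Tv N j B g m + Vs Th 2 j B g m" for g
    using VN[OF n _ B, of j g] j unfolding N_def by simp
  have A: "Vop n 1 (Vop n (int j) f) m = Vs Tv N 1 C gj m + Vs Th 2 1 C gj m"
  proof -
    have "Vs Tv N 1 B (Vop n (int j) f) m = Vs Tv N 1 B gj m"
      by (rule Vs_loc[OF vT B _ _ lj]) (auto simp: C_def)
    moreover have "Vs Th 2 1 B (Vop n (int j) f) m = Vs Th 2 1 B gj m"
      by (rule Vs_loc[OF vH B _ _ lj]) (auto simp: C_def)
    ultimately show ?thesis unfolding V1 Vs_ext[OF vT B BC] Vs_ext[OF vH B BC] by simp
  qed
  have A': "Vop n (int j) (Vop n 1 f) m = Vs Tv N j C g1 m + Vs Th 2 j C g1 m"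
  proof -
    have "Vs Tv N j B (Vop n 1 f) m = Vs Tv N j B g1 m"
      by (rule Vs_loc[OF vT B _ _ l1]) (auto simp: C_def algebra_simps)
    moreover have "Vs Th 2 j B (Vop n 1 f) m = Vs Th 2 j B g1 m"
      by (rule Vs_loc[OF vH B _ _ l1]) (auto simp: C_def algebra_simps)
    ultimately show ?thesis unfolding Vj Vs_ext[OF vT B BC] Vs_ext[OF vH B BC] by simp
  qed
  have ST: "Vs Tv N 1 C (Vs Tv N j C f) m - Vs Tv N j C (Vs Tv N 1 C f) m = (1 - real j) * Vs Tv N (j + 1) B f m"
    by (rule SP[OF vT N _ B]) (use j in \<open>auto simp: C_def\<close>)
  have SH: "Vs Th 2 1 C (Vs Th 2 j C f) m - Vs Th 2 j C (Vs Th 2 1 C f) m = (1 - real j) * Vs Th 2 (j + 1) B f m"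
    by (rule SP[OF vH _ _ _ B]) (use j in \<open>auto simp: C_def\<close>)
  have X1: "Vs Tv N 1 C (Vs Th 2 j C f) m = Vs Th 2 j C (Vs Tv N 1 C f) m"
    by (rule XS) (rule dj)
  have X2: "Vs Th 2 1 C (Vs Tv N j C f) m = Vs Tv N j C (Vs Th 2 1 C f) m"
    by (rule XS) (rule dj)
  have R: "Vop n (int (j + 1)) f m = Vs Tv N (j + 1) B f m + Vs Th 2 (j + 1) B f m"
    using VN[OF n _ B, of "j + 1" f] unfolding N_def by simp
  show ?thesis
    unfolding comm_def A A' gj_def g1_def Vs_add R
    using ST SH X1 X2 by (simp add: algebra_simps)
qed

section \<open>The rescaled times\<close>

definition cc :: "nat \<Rightarrow> nat \<Rightarrow> real" where "cc n a = 1/2 + mu n a"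

lemma Gp1: "(z::real) > 0 \<Longrightarrow> Gamma (z + 1) = z * Gamma z"
  by (rule Gamma_plus1) (auto dest: nonpos_Ints_nonpos)

lemma cc_lt: "2 \<le> n \<Longrightarrow> a < n \<Longrightarrow> cc n a = (2 * real a - 1) / (2 * real n - 2)"
proof -
  assume n: "2 \<le> n" and a: "a < n"
  then have "2 * real n - 2 \<noteq> 0" by simp
  then show ?thesis using a by (simp add: cc_def mu_def field_simps)
qed

lemma cc_n: "cc n n = 1/2" by (simp add: cc_def mu_def)

lemma cc_pos: "2 \<le> n \<Longrightarrow> a \<in> {1..n} \<Longrightarrow> cc n a > 0"
  by (cases "a = n") (auto simp: cc_n cc_lt)

lemma Tc_lt: "2 \<le> n \<Longrightarrow> a < n \<Longrightarrow> Tc n a p = (2 * real n - 2) * Gamma (real p + 1 + cc n a) / Gamma (cc n a)"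
  by (simp add: Tc_def cc_lt)

lemma Tc_n: "Tc n n p = 2 * Gamma (real p + 1 + cc n n) / Gamma (1/2)"
  by (simp add: Tc_def cc_n add.assoc)

lemma Tc_pos: "2 \<le> n \<Longrightarrow> a \<in> {1..n} \<Longrightarrow> Tc n a p > 0"
proof -
  assume n: "2 \<le> n" and a: "a \<in> {1..n}"
  have c: "cc n a > 0" using cc_pos[OF n a] .
  show ?thesis
  proof (cases "a = n")
    case True then show ?thesis using c by (auto simp: Tc_n intro!: divide_pos_pos mult_pos_pos)
  next
    case False then have "a < n" using a by auto
    then show ?thesis using c n by (auto simp: Tc_lt intro!: divide_pos_pos mult_pos_pos)
  qed
qed

lemma TcS: "2 \<le> n \<Longrightarrow> a \<in> {1..n} \<Longrightarrow> Tc n a (Suc p) = (real p + 1 + cc n a) * Tc n a p"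
proof -
  assume n: "2 \<le> n" and a: "a \<in> {1..n}"
  have c: "cc n a > 0" using cc_pos[OF n a] .
  have g: "Gamma (real (Suc p) + 1 + cc n a) = (real p + 1 + cc n a) * Gamma (real p + 1 + cc n a)"
    using Gp1[of "real p + 1 + cc n a"] c by (simp add: algebra_simps)
  show ?thesis
  proof (cases "a = n")
    case True then show ?thesis using g by (simp only: Tc_n) simp
  next
    case False then have "a < n" using a by auto
    then show ?thesis using g n by (simp only: Tc_lt) simp
  qed
qed

lemma Tc0_lt: "2 \<le> n \<Longrightarrow> 1 \<le> a \<Longrightarrow> a < n \<Longrightarrow> Tc n a 0 = 2 * real a - 1"
proof -
  assume n: "2 \<le> n" and a: "1 \<le> a" "a < n"
  have c: "cc n a > 0" using cc_pos[OF n] a by auto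
  have "Gamma (cc n a + 1) = cc n a * Gamma (cc n a)" using Gp1 c by blast
  then have "Tc n a 0 = (2 * real n - 2) * cc n a"
  proof -
    have gz: "Gamma (cc n a) \<noteq> 0" using Gamma_real_pos[OF c] by linarith
    show ?thesis using c n a gz \<open>Gamma (cc n a + 1) = cc n a * Gamma (cc n a)\<close> by (simp add: Tc_lt add.commute)
  qed
  also have "\<dots> = 2 * real a - 1" using n a by (simp add: cc_lt)
  finally show ?thesis .
qed

lemma Tc0_n: "Tc n n 0 = 1"
proof -
  have "Gamma (1/2 + 1 :: real) = 1/2 * Gamma (1/2)" using Gp1[of "1/2"] by simp
  moreover have "Gamma (1/2 :: real) > 0" by simp
  ultimately show ?thesis by (simp add: Tc_n cc_n add.commute less_imp_neq[symmetric])
qed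

lemma mTdT: "mT n a p (dT n a q f) m = Tc n a p / Tc n a q * mulv (Tvar n a p) (dv (Tvar n a q) f) m"
proof -
  have e: "dT n a q f = (\<lambda>m. (1 / Tc n a q) * dv (Tvar n a q) f m)" by (rule ext) (simp add: dT_def)
  show ?thesis unfolding mT_def e mulv_cm by simp
qed

lemma dTdT: "dT n a p (dT n b q f) m = dv (Tvar n a p) (dv (Tvar n b q) f) m / (Tc n a p * Tc n b q)"
proof -
  have e: "dT n b q f = (\<lambda>m. (1 / Tc n b q) * dv (Tvar n b q) f m)" by (rule ext) (simp add: dT_def)
  show ?thesis unfolding dT_def[of n a p] e dv_cm by simp
qed

lemma mTmT: "mT n a p (mT n b q f) m = Tc n a p * Tc n b q * mulv (Tvar n a p) (mulv (Tvar n b q) f) m"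
proof -
  have e: "mT n b q f = (\<lambda>m. Tc n b q * mulv (Tvar n b q) f m)" by (rule ext) (simp add: mT_def)
  show ?thesis unfolding mT_def[of n a p] e mulv_cm by simp
qed

lemma oddsum: fixes B :: nat and h :: "nat \<Rightarrow> real" shows "(\<Sum>k<2*B. if odd k then h k else 0) = (\<Sum>p<B. h (2*p+1))"
proof (induction B)
  case (Suc B)
  have e: "2 * Suc B = Suc (Suc (2 * B))" by simp
  show ?case unfolding e sum.lessThan_Suc Suc.IH by simp
qed simp

lemma sum_1q: fixes q :: nat and g :: "nat \<Rightarrow> real" shows "(\<Sum>t<q. g (Suc t)) = (\<Sum>a\<in>{1..q}. g a)"
proof -
  have "{1..q} = Suc ` {..<q}" by (auto simp: image_iff) (metis Suc_pred lessThan_iff not_le not_less_eq_eq Suc_le_eq)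
  then show ?thesis by (simp add: sum.reindex)
qed

lemma blockre:
  fixes N q B :: nat and h :: "nat \<Rightarrow> real"
  assumes N: "N = 2 * q"
  shows "(\<Sum>k<N*B. if odd k then h k else 0) = (\<Sum>a\<in>{1..q}. \<Sum>p<B. h (N*p + 2*a - 1))"
proof -
  let ?g = "\<lambda>k. if odd k then h k else 0"
  have "(\<Sum>k<N*B. ?g k) = (\<Sum>p<B. sum ?g {p*N..<p*N+N})"
    using sum.nat_group[of ?g N B] by (simp add: mult.commute)
  also have "\<dots> = (\<Sum>p<B. \<Sum>a\<in>{1..q}. h (N*p + 2*a - 1))"
  proof (rule sum.cong)
    fix p
    have "sum ?g {p*N..<p*N+N} = sum ?g {0 + p*N..<N + p*N}" by (simp add: add.commute)
    also have "\<dots> = (\<Sum>r\<in>{0..<N}. ?g (r + p*N))" by (rule sum.shift_bounds_nat_ivl)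
    also have "\<dots> = (\<Sum>r<2*q. if odd r then h (N*p + r) else 0)"
      using N by (intro sum.cong) (auto simp: atLeast0LessThan algebra_simps)
    also have "\<dots> = (\<Sum>t<q. h (N*p + (2*t+1)))" by (rule oddsum)
    also have "\<dots> = (\<Sum>t<q. h (N*p + 2 * Suc t - 1))" by simp
    also have "\<dots> = (\<Sum>a\<in>{1..q}. h (N*p + 2*a - 1))" by (rule sum_1q)
    finally show "sum ?g {p*N..<p*N+N} = (\<Sum>a\<in>{1..q}. h (N*p + 2*a - 1))" .
  qed simp
  also have "\<dots> = (\<Sum>a\<in>{1..q}. \<Sum>p<B. h (N*p + 2*a - 1))" by (rule sum.swap)
  finally show ?thesis .
qed

lemma Tvar_idx:
  assumes n: "2 \<le> n" and a: "1 \<le> a" and B: "bnd B m" and l: "Poly_Mapping.lookup m (Tvar n a p) \<noteq> 0"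
  shows "p < B"
proof (rule ccontr)
  assume "\<not> p < B"
  then have pB: "B \<le> p" by simp
  show False
  proof (cases "a = n")
    case True
    then show ?thesis using l B pB unfolding Tvar_def bnd_def by auto
  next
    case False
    have n1: "1 \<le> 2 * n - 2" using n by simp
    have X: "p \<le> (2 * n - 2) * p" using mult_le_mono1[OF n1, of p] by simp
    have "p \<le> (2 * n - 2) * p + 2 * a - 1"
    proof -
      define X where "X = (2 * n - 2) * p"
      have "p \<le> X" using X unfolding X_def .
      then show ?thesis using a unfolding X_def[symmetric] by linarith
    qed
    then show ?thesis using l B pB False unfolding Tvar_def bnd_def by auto
  qed
qed

lemma LSum:
  assumes n: "2 \<le> n" and B: "bnd B m"
  shows "Sum_any (\<lambda>(a,p). if a \<in> {1..n} \<and> P a p then c a p * mulv (Tvar n a p) (g a p) m else 0)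
    = (\<Sum>a\<in>{1..n}. \<Sum>p<B. if P a p then c a p * mulv (Tvar n a p) (g a p) m else 0)"
proof -
  let ?F = "\<lambda>(a,p). if a \<in> {1..n} \<and> P a p then c a p * mulv (Tvar n a p) (g a p) m else 0"
  have "Sum_any ?F = sum ?F ({1..n} \<times> {..<B})"
  proof (rule Sum_any.expand_superset)
    show "{x. ?F x \<noteq> 0} \<subseteq> {1..n} \<times> {..<B}"
    proof
      fix x assume "x \<in> {x. ?F x \<noteq> 0}"
      then obtain a p where x: "x = (a,p)" and a: "a \<in> {1..n}" and
        nz: "mulv (Tvar n a p) (g a p) m \<noteq> 0"
        by (cases x) (auto split: if_splits)
      have "Poly_Mapping.lookup m (Tvar n a p) \<noteq> 0" using nz mulv_out by metis
      then have "p < B" using a by (intro Tvar_idx[OF n _ B]) auto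
      then show "x \<in> {1..n} \<times> {..<B}" using x a by simp
    qed
  qed simp
  also have "\<dots> = (\<Sum>a\<in>{1..n}. \<Sum>p<B. ?F (a,p))"
    by (rule sum.cartesian_product[of "\<lambda>a p. ?F (a,p)", unfolded case_prod_eta, symmetric])
  also have "\<dots> = (\<Sum>a\<in>{1..n}. \<Sum>p<B. if P a p then c a p * mulv (Tvar n a p) (g a p) m else 0)"
  proof (rule sum.cong[OF refl])
    fix a assume "a \<in> {1..n}"
    then show "(\<Sum>p<B. ?F (a,p)) = (\<Sum>p<B. if P a p then c a p * mulv (Tvar n a p) (g a p) m else 0)"
      by simp
  qed
  finally show ?thesis .
qed

lemma sum_1n: fixes n :: nat shows "1 \<le> n \<Longrightarrow> (\<Sum>a\<in>{1..n}. F a) = (\<Sum>a\<in>{1..n-1}. F a) + (F n :: real)"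
proof -
  assume "1 \<le> n"
  then obtain n' where "n = Suc n'" by (cases n) auto
  then show ?thesis by (simp add: sum.cl_ivl_Suc)
qed

lemma EE_odd: "EE v s B f m = (\<Sum>k<B. if odd k then real k * mulv (v k) (dv (v (k + s)) f) m else 0)"
  unfolding EE_def by (intro sum.cong) (auto simp: wt_def)

lemma MainSum:
  assumes n: "2 \<le> n" and B: "bnd B m"
  shows "(\<Sum>a\<in>{1..n}. \<Sum>p<B. (real p + cc n a) * mulv (Tvar n a p) (dv (Tvar n a (p + d)) f) m)
    = 1 / real (2*n-2) * EE Tv ((2*n-2) * d) B f m + 1 / 2 * EE Th (2 * d) B f m"
proof -
  define N where "N = 2 * n - 2"
  have N0: "0 < N" using n unfolding N_def by simp
  have Nr: "real N = 2 * real n - 2" using n unfolding N_def by (simp add: of_nat_diff)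
  have vT: "isv Tv" and vH: "isv Th" by (simp_all add: isv_def)
  have TH: "(\<Sum>p<B. (real p + cc n n) * mulv (Tvar n n p) (dv (Tvar n n (p + d)) f) m)
      = 1 / 2 * EE Th (2 * d) B f m"
  proof -
    have "EE Th (2 * d) B f m = EE Th (2 * d) (2 * B) f m"
      by (rule EE_ext[OF vH B, symmetric]) simp
    also have "\<dots> = (\<Sum>p<B. real (2*p+1) * mulv (Th (2*p+1)) (dv (Th (2*p+1 + 2*d)) f) m)"
      unfolding EE_odd by (rule oddsum)
    finally show ?thesis by (simp add: sum_distrib_left cc_n Tvar_def algebra_simps)
  qed
  have TV: "(\<Sum>a\<in>{1..n-1}. \<Sum>p<B. (real p + cc n a) * mulv (Tvar n a p) (dv (Tvar n a (p + d)) f) m)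
      = 1 / real N * EE Tv (N * d) B f m"
  proof -
    have "EE Tv (N * d) B f m = EE Tv (N * d) (N * B) f m"
      by (rule EE_ext[OF vT B, symmetric]) (use N0 in simp)
    also have "\<dots> = (\<Sum>a\<in>{1..n-1}. \<Sum>p<B. real (N*p + 2*a - 1) * mulv (Tv (N*p + 2*a - 1)) (dv (Tv (N*p + 2*a - 1 + N * d)) f) m)"
      unfolding EE_odd by (rule blockre) (simp add: N_def)
    finally have e: "1 / real N * EE Tv (N * d) B f m = (\<Sum>a\<in>{1..n-1}. \<Sum>p<B. real (N*p + 2*a - 1) / real N * mulv (Tv (N*p + 2*a - 1)) (dv (Tv (N*p + 2*a - 1 + N * d)) f) m)"
      by (simp add: sum_distrib_left)
    show ?thesis unfolding e
    proof (intro sum.cong refl)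
      fix a p assume a: "a \<in> {1..n-1}"
      then have an: "a < n" "1 \<le> a" using n by auto
      have c: "real p + cc n a = real (N*p + 2*a - 1) / real N"
        using an N0 n by (simp add: cc_lt[OF n] Nr of_nat_diff field_simps)
      have i: "N * (p + d) + 2 * a - 1 = N*p + 2*a - 1 + N * d" using an by (simp add: algebra_simps)
      show "(real p + cc n a) * mulv (Tvar n a p) (dv (Tvar n a (p + d)) f) m
          = real (N*p + 2*a - 1) / real N * mulv (Tv (N*p + 2*a - 1)) (dv (Tv (N*p + 2*a - 1 + N * d)) f) m"
        unfolding c using an i by (simp add: Tvar_def N_def)
    qed
  qed
  have n1: "1 \<le> n" using n by simp
  show ?thesis
    unfolding sum_1n[OF n1] TH TV N_def by simp
qed

lemma etasum_gen:
  fixes F :: "nat \<Rightarrow> nat \<Rightarrow> real"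
  assumes n: "2 \<le> n" and e: "\<And>a b. e a b = (if a + b = n then \<alpha> else 0) + (if a = n \<and> b = n then \<beta> else 0)"
  shows "(\<Sum>a\<in>{1..n}. \<Sum>b\<in>{1..n}. e a b * F a b)
    = \<alpha> * (\<Sum>a\<in>{1..n-1}. F a (n - a)) + \<beta> * F n n"
proof -
  have n1: "1 \<le> n" using n by simp
  have "(\<Sum>a\<in>{1..n}. \<Sum>b\<in>{1..n}. e a b * F a b)
     = (\<Sum>a\<in>{1..n}. \<Sum>b\<in>{1..n}. (if b = n - a \<and> a < n then \<alpha> * F a b else 0)
        + (if b = n \<and> a = n then \<beta> * F a b else 0))"
  proof (intro sum.cong refl)
    fix a b assume "a \<in> {1..n}" "b \<in> {1..n}"
    then show "e a b * F a b = (if b = n - a \<and> a < n then \<alpha> * F a b else 0)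
        + (if b = n \<and> a = n then \<beta> * F a b else 0)"
      by (auto simp: e algebra_simps)
  qed
  also have "\<dots> = (\<Sum>a\<in>{1..n}. (if a < n then \<alpha> * F a (n - a) else 0)
        + (if a = n then \<beta> * F a n else 0))"
  proof (rule sum.cong[OF refl])
    fix a assume a: "a \<in> {1..n}"
    have "(\<Sum>b\<in>{1..n}. (if b = n - a \<and> a < n then \<alpha> * F a b else 0)
        + (if b = n \<and> a = n then \<beta> * F a b else 0))
      = (\<Sum>b\<in>{1..n}. if b = n - a then (if a < n then \<alpha> * F a b else 0) else 0)
        + (\<Sum>b\<in>{1..n}. if b = n then (if a = n then \<beta> * F a b else 0) else 0)"
      by (simp add: sum.distrib[symmetric] if_distrib cong: if_cong) (intro sum.cong; auto)
    also have "\<dots> = (if a < n then \<alpha> * F a (n - a) else 0) + (if a = n then \<beta> * F a n else 0)"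
      using a n1 by (auto simp: sum.delta')
    finally show "(\<Sum>b\<in>{1..n}. (if b = n - a \<and> a < n then \<alpha> * F a b else 0)
        + (if b = n \<and> a = n then \<beta> * F a b else 0))
      = (if a < n then \<alpha> * F a (n - a) else 0) + (if a = n then \<beta> * F a n else 0)" .
  qed
  also have "\<dots> = (\<Sum>a\<in>{1..n}. if a < n then \<alpha> * F a (n - a) else 0) + \<beta> * F n n"
    using n1 by (simp add: sum.distrib sum.delta')
  also have "(\<Sum>a\<in>{1..n}. if a < n then \<alpha> * F a (n - a) else 0)
      = \<alpha> * (\<Sum>a\<in>{1..n-1}. F a (n - a))"
    unfolding sum_1n[OF n1] sum_distrib_left by (auto intro!: sum.cong)
  finally show ?thesis .
qed

lemma etasum:
  fixes F :: "nat \<Rightarrow> nat \<Rightarrow> real"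
  assumes n: "2 \<le> n"
  shows "(\<Sum>a\<in>{1..n}. \<Sum>b\<in>{1..n}. eta_inv n a b * F a b)
    = (4 * real n - 4) * (\<Sum>a\<in>{1..n-1}. F a (n - a)) + 4 * F n n"
  by (rule etasum_gen[OF n]) (simp add: eta_inv_def)

lemma etasum2:
  fixes F :: "nat \<Rightarrow> nat \<Rightarrow> real"
  assumes n: "2 \<le> n"
  shows "(\<Sum>a\<in>{1..n}. \<Sum>b\<in>{1..n}. eta n a b * F a b)
    = 1 / (4 * real n - 4) * (\<Sum>a\<in>{1..n-1}. F a (n - a)) + 1/4 * F n n"
  by (rule etasum_gen[OF n]) (simp add: eta_def)

lemma QQ_odd: "QQ v s f m = (\<Sum>i<s. if odd i then dv (v i) (dv (v (s - i)) f) m else 0)"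
  unfolding QQ_def by (intro sum.cong) (auto simp: od_def)

lemma QQ_Tv1:
  assumes n: "2 \<le> n"
  shows "QQ Tv (2*n-2) f m = (\<Sum>a\<in>{1..n-1}. dv (Tv (2*a-1)) (dv (Tv (2*(n-a)-1)) f) m)"
proof -
  have "QQ Tv (2*n-2) f m = (\<Sum>i<(2*n-2)*1. if odd i then dv (Tv i) (dv (Tv (2*n-2 - i)) f) m else 0)"
    unfolding QQ_odd by simp
  also have "\<dots> = (\<Sum>a\<in>{1..n-1}. \<Sum>p<1. dv (Tv ((2*n-2)*p + 2*a-1)) (dv (Tv (2*n-2 - ((2*n-2)*p + 2*a-1))) f) m)"
    by (rule blockre) simp
  also have "\<dots> = (\<Sum>a\<in>{1..n-1}. dv (Tv (2*a-1)) (dv (Tv (2*(n-a)-1)) f) m)"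
  proof (intro sum.cong refl)
    fix a assume "a \<in> {1..n-1}"
    then have "2*n-2 - (2*a-1) = 2*(n-a)-1" by auto
    then show "(\<Sum>p<1. dv (Tv ((2*n-2)*p + 2*a-1)) (dv (Tv (2*n-2 - ((2*n-2)*p + 2*a-1))) f) m)
      = dv (Tv (2*a-1)) (dv (Tv (2*(n-a)-1)) f) m" by simp
  qed
  finally show ?thesis .
qed

lemma L1V:
  assumes n: "2 \<le> n"
  shows "L1 n f m = Vop n 1 f m"
proof -
  obtain B where B: "bnd B m" using bnd_ex by blast
  define N where "N = 2 * n - 2"
  have Nr: "real N = 2 * real n - 2" using n unfolding N_def by (simp add: of_nat_diff)
  have N0: "real N \<noteq> 0" using n Nr by simp
  have V: "Vop n 1 f m = Vs Tv N 1 B f m + Vs Th 2 1 B f m"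
    using VN[OF n order.refl B, of f] unfolding N_def by simp
  have S1: "Sum_any (\<lambda>(a,p). if a \<in> {1..n} then (real p + 1/2 + mu n a) * (real p + 3/2 + mu n a)
                   * mT n a p (dT n a (p + 1) f) m else 0)
     = Sum_any (\<lambda>(a,p). if a \<in> {1..n} \<and> True then (real p + cc n a) * mulv (Tvar n a p) (dv (Tvar n a (p + 1)) f) m else 0)"
  proof (rule Sum_any.cong, clarify)
    fix a p
    show "(if a \<in> {1..n} then (real p + 1/2 + mu n a) * (real p + 3/2 + mu n a)
                   * mT n a p (dT n a (p + 1) f) m else 0)
      = (if a \<in> {1..n} \<and> True then (real p + cc n a) * mulv (Tvar n a p) (dv (Tvar n a (p + 1)) f) m else 0)"
    proof (cases "a \<in> {1..n}")
      case True
      have c: "cc n a > 0" using cc_pos[OF n True] .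
      have t: "Tc n a p > 0" using Tc_pos[OF n True] .
      have ts: "Tc n a (p + 1) = (real p + 1 + cc n a) * Tc n a p" using TcS[OF n True] by simp
      have g: "x * (x + 1) * (T / ((x + 1) * T)) = x" if "x > 0" "T > 0" for x T :: real
      proof -
        have "T / ((x + 1) * T) = 1 / (x + 1)" using that by simp
        moreover have "x + 1 \<noteq> 0" using that by simp
        ultimately show ?thesis by simp
      qed
      have e1: "real p + 1/2 + mu n a = real p + cc n a" "real p + 3/2 + mu n a = real p + cc n a + 1"
        "real p + 1 + cc n a = real p + cc n a + 1" by (simp_all add: cc_def)
      have "(real p + 1/2 + mu n a) * (real p + 3/2 + mu n a) * (Tc n a p / Tc n a (p + 1)) = real p + cc n a"
        unfolding ts e1 using c t by (intro g) auto
      then have "(real p + 1/2 + mu n a) * (real p + 3/2 + mu n a) * (Tc n a p / Tc n a (p + 1) * X) = (real p + cc n a) * X" for X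
        by (metis mult.assoc)
      then show ?thesis using True unfolding mTdT by simp
    next
      case False
      then show ?thesis by (simp only: if_False simp_thms)
    qed
  qed
  have M: "Sum_any (\<lambda>(a,p). if a \<in> {1..n} then (real p + 1/2 + mu n a) * (real p + 3/2 + mu n a)
                   * mT n a p (dT n a (p + 1) f) m else 0)
      = 1 / real N * EE Tv N B f m + 1 / 2 * EE Th 2 B f m"
    unfolding S1 LSum[OF n B] using MainSum[OF n B, of 1 f] by (simp add: N_def)
  define F where "F = (\<lambda>a b. 1/2 * (1/2 + mu n a) * (1/2 + mu n b) * dT n a 0 (dT n b 0 f) m)"
  have Q0: "(\<Sum>a\<in>{1..n}. \<Sum>b\<in>{1..n}. 1/2 * eta_inv n a b * (1/2 + mu n a) * (1/2 + mu n b)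
                   * dT n a 0 (dT n b 0 f) m)
      = (\<Sum>a\<in>{1..n}. \<Sum>b\<in>{1..n}. eta_inv n a b * F a b)"
    unfolding F_def by (intro sum.cong refl) (simp only: mult_ac)
  have Fn: "4 * F n n = 1/2 * QQ Th 2 f m"
    unfolding F_def dTdT using Tc0_n by (simp add: QQ_def od_def mu_def Tvar_def numeral_2_eq_2 lessThan_Suc)
  have Fa: "(4 * real n - 4) * F a (n - a) = 1 / real N * dv (Tv (2*a-1)) (dv (Tv (2*(n-a)-1)) f) m"
    if a: "a \<in> {1..n-1}" for a
  proof -
    have a1: "1 \<le> a" "a < n" "1 \<le> n - a" "n - a < n" using a n by auto
    have t1: "Tc n a 0 = 2 * real a - 1" using Tc0_lt[OF n a1(1,2)] .
    have t2: "Tc n (n-a) 0 = 2 * real (n-a) - 1" using Tc0_lt[OF n a1(3,4)] .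
    have c1: "1/2 + mu n a = (2 * real a - 1) / real N" using cc_lt[OF n a1(2)] Nr by (simp add: cc_def)
    have c2: "1/2 + mu n (n-a) = (2 * real (n-a) - 1) / real N" using cc_lt[OF n a1(4)] Nr by (simp add: cc_def)
    have p1: "2 * real a - 1 \<noteq> 0" "2 * real (n-a) - 1 \<noteq> 0" using a1 by auto
    have g: "(2 * N') * (1/2 * (x / N') * (y / N') * (D / (x * y))) = 1 / N' * D"
      if "x \<noteq> 0" "y \<noteq> 0" "N' \<noteq> 0" for x y N' D :: real
      using that by (simp add: field_simps)
    have e4: "4 * real n - 4 = 2 * real N" using Nr by simp
    have tv: "Tvar n a 0 = Tv (2*a-1)" "Tvar n (n-a) 0 = Tv (2*(n-a)-1)" using a1 by (auto simp: Tvar_def)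
    show ?thesis unfolding F_def dTdT t1 t2 c1 c2 e4 tv
      by (rule g) (use p1 N0 in auto)
  qed
  have Q: "(\<Sum>a\<in>{1..n}. \<Sum>b\<in>{1..n}. 1/2 * eta_inv n a b * (1/2 + mu n a) * (1/2 + mu n b)
                   * dT n a 0 (dT n b 0 f) m)
      = 1 / real N * QQ Tv N f m + 1/2 * QQ Th 2 f m"
    unfolding Q0 etasum[OF n] Fn sum_distrib_left N_def QQ_Tv1[OF n] using Fa
    by (simp add: N_def)
  show ?thesis unfolding L1_def M Q V Vs_def by simp
qed

lemma QQ_Tv2:
  assumes n: "2 \<le> n"
  shows "QQ Tv ((2*n-2)*2) f m = 2 * (\<Sum>a\<in>{1..n-1}. dv (Tv ((2*n-2) + 2*a-1)) (dv (Tv (2*(n-a)-1)) f) m)"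
proof -
  define N where "N = 2*n-2"
  define h where "h = (\<lambda>k. dv (Tv k) (dv (Tv (N*2 - k)) f) m)"
  have "QQ Tv (N*2) f m = (\<Sum>i<N*2. if odd i then h i else 0)"
    unfolding QQ_odd h_def ..
  also have "\<dots> = (\<Sum>a\<in>{1..n-1}. \<Sum>p<2. h (N*p + 2*a-1))"
    by (rule blockre) (simp add: N_def)
  also have "\<dots> = (\<Sum>a\<in>{1..n-1}. h (2*a-1)) + (\<Sum>a\<in>{1..n-1}. h (N + 2*a-1))"
    by (simp add: numeral_2_eq_2 sum.distrib)
  also have "(\<Sum>a\<in>{1..n-1}. h (2*a-1)) = (\<Sum>a\<in>{1..n-1}. h (N + 2*a-1))"
  proof (rule sum.reindex_bij_witness[where i="\<lambda>a. n - a" and j="\<lambda>a. n - a"])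
    fix a assume a: "a \<in> {1..n-1}"
    then show "n - (n - a) = a" by auto
    show "n - a \<in> {1..n-1}" using a by auto
    have e: "N * 2 - (N + 2 * (n - a) - 1) = 2 * a - 1" "N * 2 - (2 * a - 1) = N + 2 * (n - a) - 1"
      using a n unfolding N_def by auto
    show "h (N + 2 * (n - a) - 1) = h (2 * a - 1)"
      unfolding h_def e by (rule dd_comm)
  qed auto
  also have "(\<Sum>a\<in>{1..n-1}. h (N + 2*a-1)) = (\<Sum>a\<in>{1..n-1}. dv (Tv ((2*n-2) + 2*a-1)) (dv (Tv (2*(n-a)-1)) f) m)"
  proof (intro sum.cong refl)
    fix a assume a: "a \<in> {1..n-1}"
    have e: "N * 2 - (N + 2 * a - 1) = 2 * (n - a) - 1" using a n unfolding N_def by auto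
    show "h (N + 2*a-1) = dv (Tv ((2*n-2) + 2*a-1)) (dv (Tv (2*(n-a)-1)) f) m"
      by (simp only: h_def e) (simp only: N_def)
  qed
  finally show ?thesis unfolding N_def by simp
qed

lemma L2V:
  assumes n: "2 \<le> n"
  shows "L2 n f m = Vop n 2 f m"
proof -
  obtain B where B: "bnd B m" using bnd_ex by blast
  define N where "N = 2 * n - 2"
  have Nr: "real N = 2 * real n - 2" using n unfolding N_def by (simp add: of_nat_diff)
  have N0: "real N \<noteq> 0" using n Nr by simp
  have V: "Vop n 2 f m = Vs Tv N 2 B f m + Vs Th 2 2 B f m"
    using VN[OF n _ B, of 2 f] unfolding N_def by simp
  have S1: "Sum_any (\<lambda>(a,p). if a \<in> {1..n} then (real p + 1/2 + mu n a) * (real p + 3/2 + mu n a)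
                   * (real p + 5/2 + mu n a) * mT n a p (dT n a (p + 2) f) m else 0)
     = Sum_any (\<lambda>(a,p). if a \<in> {1..n} \<and> True then (real p + cc n a) * mulv (Tvar n a p) (dv (Tvar n a (p + 2)) f) m else 0)"
  proof (rule Sum_any.cong, clarify)
    fix a p
    show "(if a \<in> {1..n} then (real p + 1/2 + mu n a) * (real p + 3/2 + mu n a)
                   * (real p + 5/2 + mu n a) * mT n a p (dT n a (p + 2) f) m else 0)
      = (if a \<in> {1..n} \<and> True then (real p + cc n a) * mulv (Tvar n a p) (dv (Tvar n a (p + 2)) f) m else 0)"
    proof (cases "a \<in> {1..n}")
      case True
      have c: "cc n a > 0" using cc_pos[OF n True] .
      have t: "Tc n a p > 0" using Tc_pos[OF n True] .
      have ts: "Tc n a (p + 2) = (real p + cc n a + 2) * ((real p + cc n a + 1) * Tc n a p)"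
        using TcS[OF n True, of "Suc p"] TcS[OF n True, of p] by (simp add: algebra_simps)
      have g: "x * (x + 1) * (x + 2) * (T / ((x + 2) * ((x + 1) * T))) = x" if "x > 0" "T > 0" for x T :: real
      proof -
        have "T / ((x + 2) * ((x + 1) * T)) = 1 / ((x + 2) * (x + 1))" using that by simp
        moreover have "x + 1 \<noteq> 0" "x + 2 \<noteq> 0" using that by simp_all
        ultimately show ?thesis by simp
      qed
      have e1: "real p + 1/2 + mu n a = real p + cc n a" "real p + 3/2 + mu n a = real p + cc n a + 1"
        "real p + 5/2 + mu n a = real p + cc n a + 2" by (simp_all add: cc_def)
      have "(real p + 1/2 + mu n a) * (real p + 3/2 + mu n a) * (real p + 5/2 + mu n a) * (Tc n a p / Tc n a (p + 2)) = real p + cc n a"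
        unfolding ts e1 using c t by (intro g) auto
      then have "(real p + 1/2 + mu n a) * (real p + 3/2 + mu n a) * (real p + 5/2 + mu n a) * (Tc n a p / Tc n a (p + 2) * X) = (real p + cc n a) * X" for X
        by (metis mult.assoc)
      then show ?thesis using True unfolding mTdT by simp
    next
      case False
      then show ?thesis by (simp only: if_False simp_thms)
    qed
  qed
  have M: "Sum_any (\<lambda>(a,p). if a \<in> {1..n} then (real p + 1/2 + mu n a) * (real p + 3/2 + mu n a)
                   * (real p + 5/2 + mu n a) * mT n a p (dT n a (p + 2) f) m else 0)
      = 1 / real N * EE Tv (N * 2) B f m + 1 / 2 * EE Th (2 * 2) B f m"
    unfolding S1 LSum[OF n B] using MainSum[OF n B, of 2 f] by (simp add: N_def)
  define F where "F = (\<lambda>a b. (1/2 - mu n a) * (1/2 - mu n b) * (3/2 - mu n b) * dT n a 1 (dT n b 0 f) m)"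
  have Q0: "(\<Sum>a\<in>{1..n}. \<Sum>b\<in>{1..n}. eta_inv n a b * (1/2 - mu n a) * (1/2 - mu n b) * (3/2 - mu n b)
                   * dT n a 1 (dT n b 0 f) m)
      = (\<Sum>a\<in>{1..n}. \<Sum>b\<in>{1..n}. eta_inv n a b * F a b)"
    unfolding F_def by (intro sum.cong refl) (simp only: mult_ac)
  have Tn1: "Tc n n 1 = 3/2" using TcS[OF n, of n 0] Tc0_n n by (simp add: cc_n)
  have Fn: "4 * F n n = 1/2 * QQ Th (2 * 2) f m"
  proof -
    have "QQ Th (2 * 2) f m = dv (Th 1) (dv (Th 3) f) m + dv (Th 3) (dv (Th 1) f) m"
      by (simp add: QQ_def od_def lessThan_nat_numeral)
    also have "\<dots> = 2 * dv (Th 3) (dv (Th 1) f) m" using dd_comm[of "Th 1" "Th 3" f m] by simp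
    finally have q: "QQ Th (2 * 2) f m = 2 * dv (Th 3) (dv (Th 1) f) m" .
    have tv: "Tvar n n 1 = Th 3" "Tvar n n 0 = Th 1" by (simp_all add: Tvar_def)
    show ?thesis unfolding F_def dTdT Tn1 Tc0_n tv q by (simp add: mu_def)
  qed
  have Fa: "(4 * real n - 4) * F a (n - a) = 2 / real N * dv (Tv ((2*n-2) + 2*a-1)) (dv (Tv (2*(n-a)-1)) f) m"
    if a: "a \<in> {1..n-1}" for a
  proof -
    have a1: "1 \<le> a" "a < n" "1 \<le> n - a" "n - a < n" using a n by auto
    have aS: "a \<in> {1..n}" using a1 by auto
    have t0: "Tc n a 0 = 2 * real a - 1" using Tc0_lt[OF n a1(1,2)] .
    have t1: "Tc n a 1 = (1 + (2 * real a - 1) / real N) * (2 * real a - 1)"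
      using TcS[OF n aS, of 0] t0 cc_lt[OF n a1(2)] Nr by simp
    have t2: "Tc n (n-a) 0 = 2 * real (n-a) - 1" using Tc0_lt[OF n a1(3,4)] .
    have c1: "1/2 - mu n (n-a) = (2 * real a - 1) / real N" "3/2 - mu n (n-a) = 1 + (2 * real a - 1) / real N"
      using a1 n by (auto simp: mu_def of_nat_diff Nr field_simps)
    have c2: "1/2 - mu n a = (2 * real (n-a) - 1) / real N"
      using a1 n by (auto simp: mu_def of_nat_diff Nr field_simps)
    have p1: "2 * real a - 1 \<noteq> 0" "2 * real (n-a) - 1 \<noteq> 0" "1 + (2 * real a - 1) / real N \<noteq> 0"
      using a1 Nr n by (auto simp: field_simps)
    have g: "(2 * N') * ((y / N') * (x / N') * z * (D / ((z * x) * y))) = 2 / N' * D"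
      if "x \<noteq> 0" "y \<noteq> 0" "z \<noteq> 0" "N' \<noteq> 0" for x y z N' D :: real
      using that by (simp add: field_simps)
    have e4: "4 * real n - 4 = 2 * real N" using Nr by simp
    have tv: "Tvar n a 1 = Tv ((2*n-2) + 2*a-1)" "Tvar n (n-a) 0 = Tv (2*(n-a)-1)" using a1 by (auto simp: Tvar_def)
    show ?thesis unfolding F_def dTdT t1 t2 c1 c2 e4 tv
      by (rule g) (use p1 N0 in auto)
  qed
  have Q: "(\<Sum>a\<in>{1..n}. \<Sum>b\<in>{1..n}. eta_inv n a b * (1/2 - mu n a) * (1/2 - mu n b) * (3/2 - mu n b)
                   * dT n a 1 (dT n b 0 f) m)
      = 1 / real N * QQ Tv (N * 2) f m + 1/2 * QQ Th (2 * 2) f m"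
    unfolding Q0 etasum[OF n] Fn sum_distrib_left N_def QQ_Tv2[OF n] using Fa
    by (simp add: N_def sum_distrib_left)
  show ?thesis unfolding L2_def M Q V Vs_def by simp
qed

lemma s1: "(\<Sum>a\<in>{1..q}. real a) = real q * (real q + 1) / 2"
  by (induction q) (auto simp: sum.cl_ivl_Suc field_simps)

lemma s2: "(\<Sum>a\<in>{1..q}. real a ^ 2) = real q * (real q + 1) * (2 * real q + 1) / 6"
  by (induction q) (auto simp: sum.cl_ivl_Suc field_simps power2_eq_square)

lemma s3: "(\<Sum>a\<in>{1..q}. (2 * real a - (real q + 1)) ^ 2) = real q * (real q ^ 2 - 1) / 3"
proof -
  have "(\<Sum>a\<in>{1..q}. (2 * real a - (real q + 1)) ^ 2)
     = (\<Sum>a\<in>{1..q}. 4 * real a ^ 2 - 4 * (real q + 1) * real a + (real q + 1) ^ 2)"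
    by (intro sum.cong refl) (simp add: power2_eq_square algebra_simps)
  also have "\<dots> = 4 * (\<Sum>a\<in>{1..q}. real a ^ 2) - 4 * (real q + 1) * (\<Sum>a\<in>{1..q}. real a) + real q * (real q + 1) ^ 2"
    by (simp add: sum.distrib sum_subtractf sum_distrib_left)
  also have "\<dots> = real q * (real q ^ 2 - 1) / 3"
    unfolding s1 s2 by (simp add: field_simps power2_eq_square)
  finally show ?thesis .
qed

lemma const_id:
  assumes n: "2 \<le> n"
  shows "1/4 * (\<Sum>a\<in>{1..n}. 1/4 - (mu n a)\<^sup>2) = real n / 24 * (1 + 1 / (2 * real n - 2))"
proof -
  define q where "q = n - 1"
  have nq: "n = q + 1" "1 \<le> q" using n unfolding q_def by auto
  have qr: "real q \<ge> 1" using nq by simp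
  have "(\<Sum>a\<in>{1..n}. 1/4 - (mu n a)\<^sup>2) = (\<Sum>a\<in>{1..q}. 1/4 - (mu n a)\<^sup>2) + 1/4"
    using sum_1n[of n "\<lambda>a. 1/4 - (mu n a)\<^sup>2"] n unfolding q_def by (simp add: mu_def)
  also have "(\<Sum>a\<in>{1..q}. 1/4 - (mu n a)\<^sup>2) = (\<Sum>a\<in>{1..q}. 1/4 - (2 * real a - (real q + 1)) ^ 2 / (4 * real q ^ 2))"
  proof (intro sum.cong refl)
    fix a assume "a \<in> {1..q}"
    then have "a \<noteq> n" using nq by auto
    then show "1/4 - (mu n a)\<^sup>2 = 1/4 - (2 * real a - (real q + 1)) ^ 2 / (4 * real q ^ 2)"
      using nq qr by (simp add: mu_def power_divide power2_eq_square algebra_simps)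
  qed
  also have "\<dots> = real q / 4 - (real q * (real q ^ 2 - 1) / 3) / (4 * real q ^ 2)"
    unfolding sum_subtractf sum_divide_distrib[symmetric] s3 by simp
  finally have e: "(\<Sum>a\<in>{1..n}. 1/4 - (mu n a)\<^sup>2) = real q / 4 - (real q * (real q ^ 2 - 1) / 3) / (4 * real q ^ 2) + 1/4" .
  have "2 * real n - 2 = 2 * real q" using nq by simp
  then show ?thesis unfolding e using qr nq by (simp add: field_simps power2_eq_square)
qed

lemma VN0:
  assumes n: "2 \<le> n" and B: "bnd B m"
  shows "Vop n 0 f m = 1 / real (2*n-2) * EE Tv 0 B f m + 1/2 * EE Th 0 B f m
      + real n / 24 * (1 + 1 / (2 * real n - 2)) * f m"
proof -
  have vT: "isv Tv" and vH: "isv Th" by (simp_all add: isv_def)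
  have z: "(2 * int n - 2) * 0 = int 0" "2 * (0::int) = int 0" by simp_all
  have q0: "QQ v 0 f m = 0" for v by (simp add: QQ_def)
  have e0: "even (int 0)" by simp
  have WT: "Sum_any (\<lambda>i. nop Tv i ((2 * int n - 2) * 0 - i) f m) = 4 * EE Tv 0 B f m"
    unfolding z W_dec[OF vT B e0] Gsum_pos Hsum_pos q0 by simp
  have WH: "Sum_any (\<lambda>i. nop Th i (2 * 0 - i) f m) = 4 * EE Th 0 B f m"
    unfolding z W_dec[OF vH B e0] Gsum_pos Hsum_pos q0 by simp
  have r: "real (2 * n - 2) = 2 * real n - 2" using n by (simp add: of_nat_diff)
  have n1: "2 * real n - 2 \<noteq> 0" using n by simp
  have c: "1 / (8 * real n - 8) * (4 * a) = 1 / (2 * real n - 2) * a" for a :: real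
  proof -
    have g: "1 / (4 * x) * (4 * a) = 1 / x * a" if "x \<noteq> 0" for x :: real
      using that by simp
    have "8 * real n - 8 = 4 * (2 * real n - 2)" by simp
    then show ?thesis using g[OF n1] by simp
  qed
  show ?thesis unfolding Vop_def Sum_any_cmult WT WH r c by simp
qed

lemma L0V:
  assumes n: "2 \<le> n"
  shows "L0 n f m = Vop n 0 f m"
proof -
  obtain B where B: "bnd B m" using bnd_ex by blast
  have S1: "Sum_any (\<lambda>(a,p). if a \<in> {1..n} then (real p + 1/2 + mu n a) * mT n a p (dT n a p f) m else 0)
     = Sum_any (\<lambda>(a,p). if a \<in> {1..n} \<and> True then (real p + cc n a) * mulv (Tvar n a p) (dv (Tvar n a (p + 0)) f) m else 0)"
  proof (rule Sum_any.cong, clarify)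
    fix a p
    show "(if a \<in> {1..n} then (real p + 1/2 + mu n a) * mT n a p (dT n a p f) m else 0)
      = (if a \<in> {1..n} \<and> True then (real p + cc n a) * mulv (Tvar n a p) (dv (Tvar n a (p + 0)) f) m else 0)"
    proof (cases "a \<in> {1..n}")
      case True
      have t: "Tc n a p > 0" using Tc_pos[OF n True] .
      then show ?thesis using True unfolding mTdT by (simp add: cc_def add.assoc)
    next
      case False
      then show ?thesis by (simp only: if_False simp_thms)
    qed
  qed
  have M: "Sum_any (\<lambda>(a,p). if a \<in> {1..n} then (real p + 1/2 + mu n a) * mT n a p (dT n a p f) m else 0)
      = 1 / real (2*n-2) * EE Tv 0 B f m + 1 / 2 * EE Th 0 B f m"
    unfolding S1 LSum[OF n B] using MainSum[OF n B, of 0 f] by simp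
  show ?thesis unfolding L0_def M VN0[OF n B] const_id[OF n] by simp
qed

lemma Gneg: "(\<Sum>k<B. Gf v (- int M) f m (int k))
   = 2 * (\<Sum>k<B. if odd k \<and> M < k then real k * mulv (v k) (dv (v (k - M)) f) m else 0)"
  unfolding sum_distrib_left
proof (rule sum.cong[OF refl])
  fix k
  show "Gf v (- int M) f m (int k) = 2 * (if odd k \<and> M < k then real k * mulv (v k) (dv (v (k - M)) f) m else 0)"
  proof (cases "odd k \<and> M < k")
    case True
    then have "nat (int k + - int M) = k - M" "0 < k" by auto
    then show ?thesis using True by (simp add: Gf_def)
  next
    case False
    then show ?thesis by (auto simp: Gf_def)
  qed
qed

lemma Hneg: "Sum_any (Hf v (- int M) f m)
   = (\<Sum>k<M. if odd k then real k * real (M - k) * mulv (v k) (mulv (v (M - k)) f) m else 0)"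
proof -
  have "Sum_any (Hf v (- int M) f m) = sum (Hf v (- int M) f m) ((\<lambda>k. - int k) ` {..<M})"
  proof (rule Sum_any.expand_superset)
    show "{a. Hf v (- int M) f m a \<noteq> 0} \<subseteq> (\<lambda>k. - int k) ` {..<M}"
    proof
      fix i assume "i \<in> {a. Hf v (- int M) f m a \<noteq> 0}"
      then have "- int M < i" "i < 0" by (auto simp: Hf_def split: if_splits)
      then show "i \<in> (\<lambda>k. - int k) ` {..<M}" by (intro image_eqI[of _ _ "nat (- i)"]) auto
    qed
  qed simp
  also have "\<dots> = (\<Sum>k<M. Hf v (- int M) f m (- int k))"
    by (subst sum.reindex) (auto simp: inj_on_def)
  also have "\<dots> = (\<Sum>k<M. if odd k then real k * real (M - k) * mulv (v k) (mulv (v (M - k)) f) m else 0)"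
  proof (rule sum.cong[OF refl])
    fix k assume k: "k \<in> {..<M}"
    show "Hf v (- int M) f m (- int k) = (if odd k then real k * real (M - k) * mulv (v k) (mulv (v (M - k)) f) m else 0)"
    proof (cases "odd k")
      case True
      then have "0 < k" by (cases k) auto
      moreover have "nat (- int k - - int M) = M - k" "real_of_int (- int k - - int M) = real (M - k)"
        using k by (auto simp: of_nat_diff)
      ultimately show ?thesis using True k by (simp add: Hf_def)
    next
      case False
      then show ?thesis by (auto simp: Hf_def)
    qed
  qed
  finally show ?thesis .
qed

lemma VNm1:
  assumes n: "2 \<le> n" and B: "bnd B m"
  shows "Vop n (-1) f m
    = 1 / real (2*n-2) * (\<Sum>k<B. if odd k \<and> 2*n-2 < k then real k * mulv (Tv k) (dv (Tv (k - (2*n-2))) f) m else 0)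
    + 1 / (8 * real n - 8) * (\<Sum>k<2*n-2. if odd k then real k * real (2*n-2 - k) * mulv (Tv k) (mulv (Tv (2*n-2 - k)) f) m else 0)
    + 1 / 2 * (\<Sum>k<B. if odd k \<and> 2 < k then real k * mulv (Th k) (dv (Th (k - 2)) f) m else 0)
    + 1 / 8 * (\<Sum>k<2. if odd k then real k * real (2 - k) * mulv (Th k) (mulv (Th (2 - k)) f) m else 0)"
proof -
  define N where "N = 2 * n - 2"
  have vT: "isv Tv" and vH: "isv Th" by (simp_all add: isv_def)
  have z: "(2 * int n - 2) * - 1 = - int N" "2 * (- 1 :: int) = - int 2" using n unfolding N_def by (simp_all add: of_nat_diff)
  have eT: "even (- int N)" unfolding N_def using n by (simp add: even_diff_nat)
  have eH: "even (- int 2)" by simp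
  have r: "real N = 2 * real n - 2" using n unfolding N_def by (simp add: of_nat_diff)
  have n1: "2 * real n - 2 \<noteq> 0" using n by simp
  have c: "1 / (8 * real n - 8) * (2 * (2 * a)) = 1 / (2 * real n - 2) * a" for a :: real
  proof -
    have g: "1 / (4 * x) * (2 * (2 * a)) = 1 / x * a" if "x \<noteq> 0" for x :: real
      using that by simp
    have "8 * real n - 8 = 4 * (2 * real n - 2)" by simp
    then show ?thesis using g[OF n1] by simp
  qed
  have c': "4 * a / (8 * real n - 8) = a / (2 * real n - 2)" for a :: real
    using c[of a] by simp
  show ?thesis unfolding Vop_def Sum_any_cmult z W_dec[OF vT B eT] W_dec[OF vH B eH] Gneg Hneg N_def[symmetric] r
    by (simp add: distrib_left c')
qed

lemma Lm1V:
  assumes n: "2 \<le> n"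
  shows "Lm1 n f m = Vop n (-1) f m"
proof -
  obtain B where B: "bnd B m" using bnd_ex by blast
  define N where "N = 2 * n - 2"
  have Nr: "real N = 2 * real n - 2" using n unfolding N_def by (simp add: of_nat_diff)
  have N0: "real N > 0" using n Nr by simp
  have vT: "isv Tv" and vH: "isv Th" by (simp_all add: isv_def)
  have S1: "Sum_any (\<lambda>(a,p). if a \<in> {1..n} \<and> p \<ge> 1 then mT n a p (dT n a (p - 1) f) m else 0)
     = Sum_any (\<lambda>(a,p). if a \<in> {1..n} \<and> 1 \<le> p then (real p + cc n a) * mulv (Tvar n a p) (dv (Tvar n a (p - 1)) f) m else 0)"
  proof (rule Sum_any.cong, clarify)
    fix a p
    show "(if a \<in> {1..n} \<and> p \<ge> 1 then mT n a p (dT n a (p - 1) f) m else 0)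
      = (if a \<in> {1..n} \<and> 1 \<le> p then (real p + cc n a) * mulv (Tvar n a p) (dv (Tvar n a (p - 1)) f) m else 0)"
    proof (cases "a \<in> {1..n} \<and> 1 \<le> p")
      case True
      then have aS: "a \<in> {1..n}" and p: "1 \<le> p" by auto
      have t: "Tc n a (p - 1) > 0" using Tc_pos[OF n aS] .
      have ts: "Tc n a p = (real p + cc n a) * Tc n a (p - 1)"
        using TcS[OF n aS, of "p - 1"] p by (simp add: of_nat_diff)
      have "Tc n a p / Tc n a (p - 1) = real p + cc n a" unfolding ts using t by simp
      then show ?thesis using True unfolding mTdT by simp
    next
      case False
      then show ?thesis by auto
    qed
  qed
  have A: "Sum_any (\<lambda>(a,p). if a \<in> {1..n} \<and> p \<ge> 1 then mT n a p (dT n a (p - 1) f) m else 0)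
     = (\<Sum>a\<in>{1..n-1}. \<Sum>p<B. if 1 \<le> p then (real p + cc n a) * mulv (Tvar n a p) (dv (Tvar n a (p - 1)) f) m else 0)
     + (\<Sum>p<B. if 1 \<le> p then (real p + cc n n) * mulv (Tvar n n p) (dv (Tvar n n (p - 1)) f) m else 0)"
    unfolding S1 LSum[OF n B] using sum_1n n by simp
  have TV: "(\<Sum>a\<in>{1..n-1}. \<Sum>p<B. if 1 \<le> p then (real p + cc n a) * mulv (Tvar n a p) (dv (Tvar n a (p - 1)) f) m else 0)
     = 1 / real N * (\<Sum>k<B. if odd k \<and> N < k then real k * mulv (Tv k) (dv (Tv (k - N)) f) m else 0)"
  proof -
    define h where "h = (\<lambda>k. if N < k then real k / real N * mulv (Tv k) (dv (Tv (k - N)) f) m else 0)"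
    have "1 / real N * (\<Sum>k<B. if odd k \<and> N < k then real k * mulv (Tv k) (dv (Tv (k - N)) f) m else 0)
        = (\<Sum>k<B. if odd k then h k else 0)"
      unfolding sum_distrib_left h_def by (intro sum.cong refl) auto
    also have "\<dots> = (\<Sum>k<N*B. if odd k then h k else 0)"
      using N0 by (intro sum_trunc[symmetric]) (auto simp: h_def mulv_out bnd_v[OF B vT])
    also have "\<dots> = (\<Sum>a\<in>{1..n-1}. \<Sum>p<B. h (N*p + 2*a - 1))"
      by (rule blockre) (simp add: N_def)
    also have "\<dots> = (\<Sum>a\<in>{1..n-1}. \<Sum>p<B. if 1 \<le> p then (real p + cc n a) * mulv (Tvar n a p) (dv (Tvar n a (p - 1)) f) m else 0)"
    proof (intro sum.cong refl)
      fix a p assume a: "a \<in> {1..n-1}"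
      then have an: "a < n" "1 \<le> a" using n by auto
      have aN: "2 * a - 1 < N" "1 \<le> 2 * a - 1" using an unfolding N_def by auto
      show "h (N*p + 2*a - 1) = (if 1 \<le> p then (real p + cc n a) * mulv (Tvar n a p) (dv (Tvar n a (p - 1)) f) m else 0)"
      proof (cases "1 \<le> p")
        case True
        have lt: "N < N*p + 2*a - 1"
        proof -
          have "N \<le> N * p" using True by simp
          then show ?thesis using aN by linarith
        qed
        have i: "N*p + 2*a - 1 - N = N * (p - 1) + 2 * a - 1"
        proof -
          obtain p' where "p = Suc p'" using True by (cases p) auto
          then show ?thesis using aN by (simp add: algebra_simps)
        qed
        have c: "real p + cc n a = real (N*p + 2*a - 1) / real N"
          using an N0 n by (simp add: cc_lt[OF n] Nr of_nat_diff field_simps)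
        show ?thesis unfolding h_def c using True lt i an by (simp add: Tvar_def N_def)
      next
        case False
        then have "p = 0" by simp
        then show ?thesis unfolding h_def using aN by simp
      qed
    qed
    finally show ?thesis by simp
  qed
  have TH: "(\<Sum>p<B. if 1 \<le> p then (real p + cc n n) * mulv (Tvar n n p) (dv (Tvar n n (p - 1)) f) m else 0)
     = 1 / 2 * (\<Sum>k<B. if odd k \<and> 2 < k then real k * mulv (Th k) (dv (Th (k - 2)) f) m else 0)"
  proof -
    define h where "h = (\<lambda>k. if 2 < k then real k / 2 * mulv (Th k) (dv (Th (k - 2)) f) m else 0)"
    have "1 / 2 * (\<Sum>k<B. if odd k \<and> 2 < k then real k * mulv (Th k) (dv (Th (k - 2)) f) m else 0)
        = (\<Sum>k<B. if odd k then h k else 0)"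
      unfolding sum_distrib_left h_def by (intro sum.cong refl) auto
    also have "\<dots> = (\<Sum>k<2*B. if odd k then h k else 0)"
      by (intro sum_trunc[symmetric]) (auto simp: h_def mulv_out bnd_v[OF B vH])
    also have "\<dots> = (\<Sum>p<B. h (2*p+1))" by (rule oddsum)
    also have "\<dots> = (\<Sum>p<B. if 1 \<le> p then (real p + cc n n) * mulv (Tvar n n p) (dv (Tvar n n (p - 1)) f) m else 0)"
    proof (intro sum.cong refl)
      fix p
      show "h (2*p+1) = (if 1 \<le> p then (real p + cc n n) * mulv (Tvar n n p) (dv (Tvar n n (p - 1)) f) m else 0)"
      proof (cases "1 \<le> p")
        case True
        then obtain p' where p: "p = Suc p'" by (cases p) auto
        show ?thesis unfolding h_def p by (simp add: Tvar_def cc_n field_simps)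
      qed (simp add: h_def)
    qed
    finally show ?thesis by simp
  qed
  define F where "F = (\<lambda>a b. 1/2 * mT n a 0 (mT n b 0 f) m)"
  have Q0: "(\<Sum>a\<in>{1..n}. \<Sum>b\<in>{1..n}. 1/2 * eta n a b * mT n a 0 (mT n b 0 f) m)
      = (\<Sum>a\<in>{1..n}. \<Sum>b\<in>{1..n}. eta n a b * F a b)"
    unfolding F_def by (intro sum.cong refl) (simp only: mult_ac)
  have Fn: "1/4 * F n n = 1 / 8 * (\<Sum>k<2. if odd k then real k * real (2 - k) * mulv (Th k) (mulv (Th (2 - k)) f) m else 0)"
    unfolding F_def mTmT Tc0_n by (simp add: Tvar_def lessThan_nat_numeral)
  have Fa: "(\<Sum>a\<in>{1..n-1}. F a (n - a))
      = 1 / 2 * (\<Sum>k<N. if odd k then real k * real (N - k) * mulv (Tv k) (mulv (Tv (N - k)) f) m else 0)"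
  proof -
    have "(\<Sum>k<N*1. if odd k then real k * real (N - k) * mulv (Tv k) (mulv (Tv (N - k)) f) m else 0)
      = (\<Sum>a\<in>{1..n-1}. \<Sum>p<1. real (N*p + 2*a - 1) * real (N - (N*p + 2*a - 1)) * mulv (Tv (N*p + 2*a - 1)) (mulv (Tv (N - (N*p + 2*a - 1))) f) m)"
      by (rule blockre) (simp add: N_def)
    also have "\<dots> = (\<Sum>a\<in>{1..n-1}. 2 * F a (n - a))"
    proof (intro sum.cong refl)
      fix a assume a: "a \<in> {1..n-1}"
      then have a1: "1 \<le> a" "a < n" "1 \<le> n - a" "n - a < n" using n by auto
      have e: "N - (2 * a - Suc 0) = 2 * (n - a) - Suc 0" using a1 unfolding N_def by auto
      have t1: "Tc n a 0 = real (2 * a - 1)" using Tc0_lt[OF n a1(1,2)] a1 by (simp add: of_nat_diff)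
      have t2: "Tc n (n-a) 0 = real (2 * (n - a) - 1)" using Tc0_lt[OF n a1(3,4)] a1 by (simp add: of_nat_diff)
      have tv: "Tvar n a 0 = Tv (2*a-1)" "Tvar n (n-a) 0 = Tv (2*(n-a)-1)" using a1 by (auto simp: Tvar_def)
      show "(\<Sum>p<1. real (N*p + 2*a - 1) * real (N - (N*p + 2*a - 1)) * mulv (Tv (N*p + 2*a - 1)) (mulv (Tv (N - (N*p + 2*a - 1))) f) m)
          = 2 * F a (n - a)"
        unfolding F_def mTmT t1 t2 tv by (simp add: e)
    qed
    finally show ?thesis by (simp add: sum_distrib_left)
  qed
  have Q: "(\<Sum>a\<in>{1..n}. \<Sum>b\<in>{1..n}. 1/2 * eta n a b * mT n a 0 (mT n b 0 f) m)
    = 1 / (8 * real n - 8) * (\<Sum>k<N. if odd k then real k * real (N - k) * mulv (Tv k) (mulv (Tv (N - k)) f) m else 0)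
    + 1 / 8 * (\<Sum>k<2. if odd k then real k * real (2 - k) * mulv (Th k) (mulv (Th (2 - k)) f) m else 0)"
  proof -
    have g: "1 / (4 * x - 4) * (1/2 * y) = 1 / (8 * x - 8) * y" for x y :: real
      by (simp add: field_simps)
    show ?thesis unfolding Q0 etasum2[OF n] Fn Fa g ..
  qed
  show ?thesis unfolding Lm1_def A TV TH Q VNm1[OF n B] N_def by simp
qed

lemma Lhi_V:
  assumes n: "2 \<le> n"
  shows "Lhi n k = Vop n (int k + 2)"
proof (induction k)
  case 0
  show ?case by (rule ext, rule ext) (simp add: L2V[OF n])
next
  case (Suc k)
  have L1e: "L1 n = Vop n 1" by (rule ext, rule ext) (rule L1V[OF n])
  show ?case
  proof (rule ext, rule ext)
    fix f m
    have c: "comm (Vop n 1) (Vop n (int (k + 2))) f m = (1 - real (k + 2)) * Vop n (int (k + 2 + 1)) f m"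
      by (rule CM[OF n]) simp
    have nz: "1 - (real k + 2) \<noteq> 0" by simp
    have i1: "int k + 2 = int (k + 2)" "int (k + 2 + 1) = int (Suc k) + 2" by simp_all
    show "Lhi n (Suc k) f m = Vop n (int (Suc k) + 2) f m"
      using c nz unfolding Lhi.simps L1e Suc.IH i1 by simp
  qed
qed

theorem lemma6p3:
  fixes n :: nat and j :: int
  assumes "n \<ge> 3" and "j \<ge> -1"
  shows "Lop n j = Vop n j"
proof -
  have n: "2 \<le> n" using assms(1) by simp
  consider "j = -1" | "j = 0" | "j = 1" | "j \<ge> 2" using assms(2) by linarith
  then show ?thesis
  proof cases
    case 1
    then show ?thesis unfolding Lop_def by (intro ext) (simp add: Lm1V[OF n])
  next
    case 2
    then show ?thesis unfolding Lop_def by (intro ext) (simp add: L0V[OF n])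
  next
    case 3
    then show ?thesis unfolding Lop_def by (intro ext) (simp add: L1V[OF n])
  next
    case 4
    then have "int (nat (j - 2)) + 2 = j" by simp
    then show ?thesis unfolding Lop_def Lhi_V[OF n] using 4 by simp
  qed
qed

end
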